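(* Let $q_{XUVZ}$ be a joint distribution on $\{0,1\}^3\times\mathcal Z$ ($\mathcal Z$ finite), and let $(X^{1:N},U^{1:N},V^{1:N},Z^{1:N})$ be distributed according to $\prod_{i=1}^Nq_{XUVZ}$. Fix $\xi>0$, let $\delta_{\mathcal A}(N)=\log(11)\sqrt{\tfrac2N(3+\log N)}$, $\epsilon_1=2(\delta_{\mathcal A}(N)+\xi)$, and let $r_X=N(H(X|UZ)-\epsilon_1/2)$, $r_U=N(H(U|Z)-\epsilon_1/2)$, $r_V=N(H(V|UZX)-\epsilon_1/2)$ (assumed to be integers). Let $G_X:\{0,1\}^N\to\{0,1\}^{r_X}$, $G_U:\{0,1\}^N\to\{0,1\}^{r_U}$, $G_V:\{0,1\}^N\to\{0,1\}^{r_V}$ be chosen independently and uniformly at random from families of two-universal hash functions, independently of $(X^{1:N},U^{1:N},V^{1:N},Z^{1:N})$, and let $q_{G_X(X^{1:N})G_U(U^{1:N})G_V(V^{1:N})Z^{1:N}}$ denote the resulting joint distribution of the hash outputs and $Z^{1:N}$. Let $p^{unif}_{\bar E},p^{unif}_{\bar D},p^{unif}_{\bar F}$ be the uniform distributions on $\{0,1\}^{r_X},\{0,1\}^{r_U},\{0,1\}^{r_V}$. Then $$\mathbb V\big(q_{G_X(X^{1:N})G_U(U^{1:N})G_V(V^{1:N})Z^{1:N}},\,p^{unif}_{\bar E}p^{unif}_{\bar D}p^{unif}_{\bar F}q_{Z^{1:N}}\big)\le \frac2N+\sqrt7\cdot2^{-N\xi/2}.$$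
   Context: $\mathbb V(p,q)=\sum_x|p(x)-q(x)|$; $\log$ is base 2; $q_{Z^{1:N}}=\prod_{i=1}^Nq_Z$. In the paper, $q_{XUVZ}$ arises from independent binary $X,U,V$ and $Z$ generated through a channel from $(X,\max(U,V))$. *)

theory Defs
  imports "HOL-Library.FuncSet" Complex_Main
begin

definition is_pmf :: "('a::finite \<Rightarrow> real) \<Rightarrow> bool" where
  "is_pmf q \<longleftrightarrow> (\<forall>w. 0 \<le> q w) \<and> (\<Sum>w\<in>UNIV. q w) = 1"

definition prob_of :: "('a::finite \<Rightarrow> real) \<Rightarrow> ('a \<Rightarrow> 'b) \<Rightarrow> 'b \<Rightarrow> real" where
  "prob_of q f y = (\<Sum>w | f w = y. q w)"

text \<open>Conditional entropy H(f|g) (log base 2, with 0 log 0 = 0).\<close>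
definition cond_entropy :: "('a::finite \<Rightarrow> real) \<Rightarrow> ('a \<Rightarrow> 'b) \<Rightarrow> ('a \<Rightarrow> 'c) \<Rightarrow> real" where
  "cond_entropy q f g =
     - (\<Sum>(a, b) \<in> (\<lambda>w. (f w, g w)) ` UNIV.
          prob_of q (\<lambda>w. (f w, g w)) (a, b) *
          log 2 (prob_of q (\<lambda>w. (f w, g w)) (a, b) / prob_of q g b))"

definition compX :: "bool \<times> bool \<times> bool \<times> 'z \<Rightarrow> bool" where "compX w = fst w"
definition compU :: "bool \<times> bool \<times> bool \<times> 'z \<Rightarrow> bool" where "compU w = fst (snd w)"
definition compV :: "bool \<times> bool \<times> bool \<times> 'z \<Rightarrow> bool" where "compV w = fst (snd (snd w))"
definition compZ :: "bool \<times> bool \<times> bool \<times> 'z \<Rightarrow> 'z" where "compZ w = snd (snd (snd w))"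

definition bitstrings :: "nat \<Rightarrow> bool list set" where
  "bitstrings n = {xs. length xs = n}"

text \<open>A (finite, nonempty) two-universal family of hash functions {0,1}^N -> {0,1}^r,
  the functions being taken extensionally on {0,1}^N.\<close>
definition two_universal :: "nat \<Rightarrow> nat \<Rightarrow> (bool list \<Rightarrow> bool list) set \<Rightarrow> bool" where
  "two_universal N r F \<longleftrightarrow> F \<noteq> {} \<and> F \<subseteq> (bitstrings N \<rightarrow>\<^sub>E bitstrings r) \<and>
     (\<forall>x\<in>bitstrings N. \<forall>x'\<in>bitstrings N. x \<noteq> x' \<longrightarrow>
        real (card {g\<in>F. g x = g x'}) \<le> real (card F) / 2 ^ r)"

definition iid :: "('a \<Rightarrow> real) \<Rightarrow> 'a list \<Rightarrow> real" where
  "iid q s = prod_list (map q s)"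

text \<open>Joint distribution of (G_X(X^{1:N}), G_U(U^{1:N}), G_V(V^{1:N}), Z^{1:N}), where the
  hash functions are drawn uniformly and independently from FX, FU, FV (and marginalised).\<close>
definition hashed_dist ::
  "nat \<Rightarrow> (bool \<times> bool \<times> bool \<times> 'z::finite \<Rightarrow> real) \<Rightarrow> (bool list \<Rightarrow> bool list) set \<Rightarrow>
   (bool list \<Rightarrow> bool list) set \<Rightarrow> (bool list \<Rightarrow> bool list) set \<Rightarrow>
   bool list \<times> bool list \<times> bool list \<times> 'z list \<Rightarrow> real" where
  "hashed_dist N q FX FU FV = (\<lambda>(e, d, f, zs).
     (\<Sum>gX\<in>FX. \<Sum>gU\<in>FU. \<Sum>gV\<in>FV. \<Sum>s\<in>{s. length s = N}.
        (if gX (map compX s) = e \<and> gU (map compU s) = d \<and> gV (map compV s) = f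
            \<and> map compZ s = zs then iid q s else 0))
     / (real (card FX) * real (card FU) * real (card FV)))"

definition ideal_dist ::
  "nat \<Rightarrow> (bool \<times> bool \<times> bool \<times> 'z::finite \<Rightarrow> real) \<Rightarrow> nat \<Rightarrow> nat \<Rightarrow> nat \<Rightarrow>
   bool list \<times> bool list \<times> bool list \<times> 'z list \<Rightarrow> real" where
  "ideal_dist N q rX rU rV = (\<lambda>(e, d, f, zs).
     (if e \<in> bitstrings rX \<and> d \<in> bitstrings rU \<and> f \<in> bitstrings rV \<and> length zs = N
      then iid (prob_of q compZ) zs / 2 ^ (rX + rU + rV) else 0))"

text \<open>Variational distance V(p,q) = sum |p - q| over a finite set S containing both supports.\<close>
definition var_dist :: "('a \<Rightarrow> real) \<Rightarrow> ('a \<Rightarrow> real) \<Rightarrow> 'a set \<Rightarrow> real" where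
  "var_dist p p' S = (\<Sum>x\<in>S. \<bar>p x - p' x\<bar>)"

definition delta_A :: "nat \<Rightarrow> real" where
  "delta_A N = log 2 11 * sqrt (2 / real N * (3 + log 2 (real N)))"

end

theory Submission
  imports Defs
begin

lemma exp_neg_le: fixes x :: real assumes "0 \<le> x" shows "exp (-x) \<le> 1 - x + x^2/2"
proof -
  obtain t where t: "exp (-x) = (\<Sum>m<3. ((-x) ^ m) / fact m) + (exp t / fact 3) * (-x) ^ 3"
    using Maclaurin_exp_le[of "-x" 3] by blast
  have s: "(\<Sum>m<3. ((-x) ^ m) / fact m) = 1 - x + x^2/2"
    by (simp add: eval_nat_numeral fact_numeral)
  have "(exp t / fact 3) * (-x) ^ 3 \<le> 0"
    using assms by (simp add: mult_nonneg_nonpos)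
  then show ?thesis using t s by linarith
qed

lemma p_ln_sq_le: fixes p :: real assumes "0 < p" "p \<le> 1" shows "p * (ln p)^2 \<le> 1"
proof -
  define s where "s = p powr (1/4)"
  have s0: "0 < s" using assms by (simp add: s_def)
  have s1: "s \<le> 1" using assms by (simp add: s_def powr_le1)
  have ps: "p = s^4" using assms unfolding s_def by (simp add: powr_powr flip: powr_realpow)
  have lp: "ln p = 4 * ln s" using ps s0 by (simp add: ln_realpow)
  have a: "0 \<le> - ln s" using s0 s1 by simp
  have b: "- ln s \<le> (1 - s) / s"
  proof -
    have "ln (1/s) \<le> 1/s - 1" using s0 by (intro ln_le_minus_one) simp
    then show ?thesis using s0 by (simp add: ln_div diff_divide_distrib)
  qed
  have "(ln s)^2 = (- ln s)^2" by simp
  also have "\<dots> \<le> ((1 - s)/s)^2" using a b by (intro power_mono) auto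
  finally have c: "(ln s)^2 \<le> ((1 - s)/s)^2" .
  have "p * (ln p)^2 = 16 * s^4 * (ln s)^2" using ps lp by (simp add: power2_eq_square)
  also have "\<dots> \<le> 16 * s^4 * ((1 - s)/s)^2" using c by (intro mult_left_mono) auto
  also have "\<dots> = 16 * (s * (1 - s))^2" using s0 by (simp add: field_simps power2_eq_square eval_nat_numeral)
  also have "\<dots> \<le> 1"
  proof -
    have "0 \<le> s * (1 - s)" using s0 s1 by simp
    moreover have "s * (1 - s) \<le> 1/4" proof -
      have "0 \<le> (s - 1/2)^2" by simp
      then show ?thesis by (simp add: power2_eq_square algebra_simps)
    qed
    ultimately have "(s*(1-s))^2 \<le> (1/4)^2" by (intro power_mono) auto
    then show ?thesis by (simp add: power2_eq_square)
  qed
  finally show ?thesis .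
qed

lemma lists_Suc_eq: "{s. length s = Suc n \<and> P s} = (\<lambda>(a,t). a#t) ` {(a,t). length t = n \<and> P (a#t)}"
  by (auto simp: length_Suc_conv image_iff)

lemma inj_cons: "inj_on (\<lambda>(a,t). a#t) A" by (auto simp: inj_on_def)

lemma sum_lists_prod:
  fixes h :: "'a::finite \<Rightarrow> real"
  shows "(\<Sum>s\<in>{s. length s = N}. prod_list (map h s)) = (\<Sum>w\<in>UNIV. h w)^N"
proof (induction N)
  case 0
  then show ?case by simp
next
  case (Suc n)
  have eq: "{s. length s = Suc n} = (\<lambda>(a,t). a#t) ` (UNIV \<times> {t. length t = n})"
    using lists_Suc_eq[of n "\<lambda>_. True"] by auto
  have "(\<Sum>s\<in>{s. length s = Suc n}. prod_list (map h s))
      = (\<Sum>(a,t)\<in>UNIV \<times> {t. length t = n}. h a * prod_list (map h t))"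
    unfolding eq by (subst sum.reindex[OF inj_cons]) (simp add: case_prod_unfold)
  also have "\<dots> = (\<Sum>a\<in>UNIV. h a) * (\<Sum>t\<in>{t. length t = n}. prod_list (map h t))"
    by (simp add: sum_product sum.cartesian_product)
  finally show ?case using Suc by simp
qed

lemma marginal:
  fixes q :: "'a::finite \<Rightarrow> real" and f :: "'a \<Rightarrow> 'b"
  shows "(\<Sum>t\<in>{t. length t = N \<and> map f t = y}. iid q t)
         = (if length y = N then iid (prob_of q f) y else 0)"
proof (induction N arbitrary: y)
  case 0
  then show ?case by (cases y) (auto simp: iid_def)
next
  case (Suc n)
  show ?case
  proof (cases y)
    case Nil
    have "sum (iid q) {t. t = [] \<and> length t = Suc n} = 0" by (rule sum.neutral) auto
    then show ?thesis using Nil by simp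
  next
    case (Cons b y')
    have eq: "{t. length t = Suc n \<and> map f t = y} = (\<lambda>(a,t). a#t) ` ({a. f a = b} \<times> {t. length t = n \<and> map f t = y'})"
      using lists_Suc_eq[of n "\<lambda>t. map f t = y"] Cons by auto
    have "(\<Sum>t\<in>{t. length t = Suc n \<and> map f t = y}. iid q t)
      = (\<Sum>(a,t)\<in>{a. f a = b} \<times> {t. length t = n \<and> map f t = y'}. q a * iid q t)"
      unfolding eq by (subst sum.reindex[OF inj_cons]) (simp add: case_prod_unfold iid_def)
    also have "\<dots> = (\<Sum>a\<in>{a. f a = b}. q a) * (\<Sum>t\<in>{t. length t = n \<and> map f t = y'}. iid q t)"
      by (simp add: sum_product sum.cartesian_product)
    finally show ?thesis using Suc Cons by (simp add: iid_def prob_of_def[symmetric])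
  qed
qed

locale condc =
  fixes q :: "'a::finite \<Rightarrow> real" and f :: "'a \<Rightarrow> bool" and g :: "'a \<Rightarrow> 'c::finite"
  assumes pmf: "is_pmf q"
begin

definition Pfg where "Pfg y = prob_of q (\<lambda>w. (f w, g w)) y"
definition Pg where "Pg b = prob_of q g b"
definition cc where "cc w = Pfg (f w, g w) / Pg (g w)"

lemma q_nn: "0 \<le> q w" using pmf by (simp add: is_pmf_def)
lemma q_sum: "(\<Sum>w\<in>UNIV. q w) = 1" using pmf by (simp add: is_pmf_def)

lemma Pfg_nn: "0 \<le> Pfg y" unfolding Pfg_def prob_of_def by (intro sum_nonneg q_nn)
lemma Pg_nn: "0 \<le> Pg y" unfolding Pg_def prob_of_def by (intro sum_nonneg q_nn)

lemma Pfg_le: "Pfg (a, b) \<le> Pg b"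
  unfolding Pfg_def Pg_def prob_of_def by (rule sum_mono2) (auto simp: q_nn)

lemma Pfg_ge: "q w \<le> Pfg (f w, g w)"
  unfolding Pfg_def prob_of_def
  using member_le_sum[of w "{x. (f x, g x) = (f w, g w)}" q] q_nn by auto

lemma cc_pos: "0 < q w \<Longrightarrow> 0 < cc w"
  unfolding cc_def using Pfg_ge[of w] Pfg_le[of "f w" "g w"] by auto

lemma cc_le1: "cc w \<le> 1"
  unfolding cc_def using Pfg_le[of "f w" "g w"] Pg_nn[of "g w"] Pfg_nn
  by (cases "Pg (g w) = 0") (auto simp: divide_le_eq_1)

lemma cc_nn: "0 \<le> cc w" unfolding cc_def using Pfg_nn Pg_nn by simp

lemma group_fg:
  "(\<Sum>w\<in>UNIV. q w * h (f w, g w)) = (\<Sum>y\<in>(\<lambda>w. (f w, g w)) ` UNIV. Pfg y * h y)"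
proof -
  have "(\<Sum>w\<in>UNIV. q w * h (f w, g w))
      = (\<Sum>y\<in>(\<lambda>w. (f w, g w)) ` UNIV. \<Sum>w\<in>{x\<in>UNIV. (f x, g x) = y}. q w * h (f w, g w))"
    by (rule sum.image_gen) simp
  also have "\<dots> = (\<Sum>y\<in>(\<lambda>w. (f w, g w)) ` UNIV. Pfg y * h y)"
  proof (rule sum.cong)
    fix y assume "y \<in> (\<lambda>w. (f w, g w)) ` UNIV"
    have "(\<Sum>w\<in>{x\<in>UNIV. (f x, g x) = y}. q w * h (f w, g w)) = (\<Sum>w\<in>{x\<in>UNIV. (f x, g x) = y}. q w * h y)"
      by (rule sum.cong) auto
    also have "\<dots> = Pfg y * h y" by (simp add: Pfg_def prob_of_def sum_distrib_right)
    finally show "(\<Sum>w\<in>{x\<in>UNIV. (f x, g x) = y}. q w * h (f w, g w)) = Pfg y * h y" .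
  qed simp
  finally show ?thesis .
qed

lemma Pg_sum: "(\<Sum>b\<in>UNIV. Pg b) = 1"
proof -
  have "(\<Sum>b\<in>UNIV. Pg b) = (\<Sum>b\<in>UNIV. sum q {x. x \<in> UNIV \<and> g x = b})"
    by (simp add: Pg_def prob_of_def)
  also have "\<dots> = sum q UNIV" by (rule sum.group) auto
  finally show ?thesis using q_sum by simp
qed

lemma E1: "(\<Sum>w\<in>UNIV. q w * (- ln (cc w))) = ln 2 * cond_entropy q f g"
proof -
  have "(\<Sum>w\<in>UNIV. q w * (- ln (cc w))) = (\<Sum>w\<in>UNIV. q w * (\<lambda>(a,b). - ln (Pfg (a,b) / Pg b)) (f w, g w))"
    by (simp add: cc_def)
  also have "\<dots> = (\<Sum>y\<in>(\<lambda>w. (f w, g w)) ` UNIV. Pfg y * (\<lambda>(a,b). - ln (Pfg (a,b) / Pg b)) y)"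
    by (rule group_fg)
  also have "\<dots> = ln 2 * cond_entropy q f g"
    unfolding cond_entropy_def mult_minus_right sum_distrib_left sum_negf[symmetric]
    by (rule sum.cong) (auto simp: Pfg_def Pg_def log_def)
  finally show ?thesis .
qed

lemma E2: "(\<Sum>w\<in>UNIV. q w * (ln (cc w))^2) \<le> 2"
proof -
  have "(\<Sum>w\<in>UNIV. q w * (ln (cc w))^2) = (\<Sum>w\<in>UNIV. q w * (\<lambda>(a,b). (ln (Pfg (a,b) / Pg b))^2) (f w, g w))"
    by (simp add: cc_def)
  also have "\<dots> = (\<Sum>y\<in>(\<lambda>w. (f w, g w)) ` UNIV. Pfg y * (\<lambda>(a,b). (ln (Pfg (a,b) / Pg b))^2) y)"
    by (rule group_fg)
  also have "\<dots> \<le> (\<Sum>y\<in>(\<lambda>w. (f w, g w)) ` UNIV. Pg (snd y))"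
  proof (rule sum_mono)
    fix y :: "bool \<times> 'c"
    obtain a b where y: "y = (a,b)" by (cases y)
    show "Pfg y * (\<lambda>(a,b). (ln (Pfg (a,b) / Pg b))^2) y \<le> Pg (snd y)"
    proof (cases "Pfg (a,b) = 0")
      case True
      then show ?thesis using y Pg_nn by simp
    next
      case False
      then have p0: "0 < Pfg (a,b)" using Pfg_nn[of "(a,b)"] by simp
      then have g0: "0 < Pg b" using Pfg_le[of a b] by simp
      define r where "r = Pfg (a,b) / Pg b"
      have r0: "0 < r" "r \<le> 1" using p0 g0 Pfg_le[of a b] by (auto simp: r_def)
      have "Pfg (a,b) * (ln r)^2 = Pg b * (r * (ln r)^2)" using g0 by (simp add: r_def)
      also have "\<dots> \<le> Pg b * 1" using p_ln_sq_le[OF r0] g0 by (intro mult_left_mono) auto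
      finally show ?thesis using y by (simp add: r_def)
    qed
  qed
  also have "\<dots> \<le> (\<Sum>y\<in>(UNIV::(bool\<times>'c) set). Pg (snd y))"
    by (rule sum_mono2) (auto simp: Pg_nn)
  also have "\<dots> = (\<Sum>a\<in>(UNIV::bool set). \<Sum>b\<in>UNIV. Pg b)"
    unfolding sum.cartesian_product UNIV_Times_UNIV[symmetric] by (simp add: case_prod_unfold)
  also have "\<dots> = 2" using Pg_sum by simp
  finally show ?thesis .
qed

lemma base_bound:
  assumes "0 \<le> \<beta>"
  shows "(\<Sum>w\<in>UNIV. q w * cc w powr \<beta>) \<le> exp (- \<beta> * (ln 2 * cond_entropy q f g) + \<beta>^2)"
proof -
  have "(\<Sum>w\<in>UNIV. q w * cc w powr \<beta>) \<le> (\<Sum>w\<in>UNIV. q w * (1 - \<beta> * (- ln (cc w)) + (\<beta>^2/2) * (ln (cc w))^2))"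
  proof (rule sum_mono)
    fix w
    show "q w * cc w powr \<beta> \<le> q w * (1 - \<beta> * (- ln (cc w)) + (\<beta>^2/2) * (ln (cc w))^2)"
    proof (cases "q w = 0")
      case True then show ?thesis by simp
    next
      case False
      then have qp: "0 < q w" using q_nn[of w] by simp
      have c0: "0 < cc w" by (rule cc_pos[OF qp])
      have "ln (cc w) \<le> 0" using cc_le1[of w] c0 by simp
      then have l0: "0 \<le> \<beta> * (- ln (cc w))" using assms by (simp add: mult_nonneg_nonpos)
      have "cc w powr \<beta> = exp (- (\<beta> * (- ln (cc w))))" using c0 by (simp add: powr_def)
      also have "\<dots> \<le> 1 - \<beta> * (- ln (cc w)) + (\<beta> * (- ln (cc w)))^2/2" by (rule exp_neg_le[OF l0])
      also have "\<dots> = 1 - \<beta> * (- ln (cc w)) + (\<beta>^2/2) * (ln (cc w))^2" by (simp add: power_mult_distrib)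
      finally show ?thesis using qp by (intro mult_left_mono) auto
    qed
  qed
  also have "\<dots> = (\<Sum>w\<in>UNIV. q w) - \<beta> * (\<Sum>w\<in>UNIV. q w * (- ln (cc w))) + (\<beta>^2/2) * (\<Sum>w\<in>UNIV. q w * (ln (cc w))^2)"
    by (simp add: algebra_simps sum.distrib sum_subtractf sum_distrib_left sum_negf)
  also have "\<dots> \<le> 1 - \<beta> * (ln 2 * cond_entropy q f g) + \<beta>^2"
    using E1 E2 q_sum by (simp add: mult_left_mono[OF E2, of "\<beta>^2/2", simplified])
  also have "\<dots> \<le> exp (- \<beta> * (ln 2 * cond_entropy q f g) + \<beta>^2)"
    using exp_ge_add_one_self[of "- \<beta> * (ln 2 * cond_entropy q f g) + \<beta>^2"] by (simp add: algebra_simps)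
  finally show ?thesis .
qed

end

lemma prod_list_powr: "prod_list (map (\<lambda>w. c w powr \<beta>) s) = prod_list (map c s) powr (\<beta>::real)"
  by (induction s) (simp_all add: powr_mult)

lemma iid_mult: "iid q s * prod_list (map h s) = prod_list (map (\<lambda>w. q w * h w) s)"
  by (induction s) (simp_all add: iid_def)

lemma finite_len: "finite {s::'a::finite list. length s = N}"
proof -
  have "{s::'a list. length s = N} = {xs. set xs \<subseteq> UNIV \<and> length xs = N}" by simp
  then show ?thesis using finite_lists_length_eq[of "UNIV::'a set" N] by simp
qed

lemma delta_pos: assumes "1 \<le> N" shows "0 < delta_A N"
proof -
  have "0 \<le> log 2 (real N)" using assms by simp
  then have a: "0 < 3 + log 2 (real N)" by simp
  have b: "0 < 2 / real N" using assms by simp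
  have "0 < 2 / real N * (3 + log 2 (real N))" using mult_pos_pos[OF b a] .
  moreover have "0 < log 2 (11::real)" by simp
  ultimately show ?thesis unfolding delta_A_def by simp
qed

context condc
begin

lemma iid_nn: "0 \<le> iid q s" unfolding iid_def by (intro prod_list_nonneg) (auto simp: q_nn)

lemma markov:
  assumes "0 < \<beta>"
  shows "(\<Sum>s\<in>{s. length s = N \<and> prod_list (map cc s) > 2 powr (-k)}. iid q s)
         \<le> 2 powr (k*\<beta>) * (\<Sum>w\<in>UNIV. q w * cc w powr \<beta>)^N"
proof -
  let ?F = "\<lambda>s. iid q s * (prod_list (map cc s) powr \<beta> * 2 powr (k*\<beta>))"
  have "(\<Sum>s\<in>{s. length s = N \<and> prod_list (map cc s) > 2 powr (-k)}. iid q s)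
       \<le> (\<Sum>s\<in>{s. length s = N \<and> prod_list (map cc s) > 2 powr (-k)}. ?F s)"
  proof (rule sum_mono)
    fix s assume "s \<in> {s. length s = N \<and> prod_list (map cc s) > 2 powr (-k)}"
    then have h: "prod_list (map cc s) > 2 powr (-k)" by simp
    have "(2 powr (-k)) powr \<beta> \<le> prod_list (map cc s) powr \<beta>"
      using h assms by (intro powr_mono2) auto
    then have "2 powr (-k*\<beta>) \<le> prod_list (map cc s) powr \<beta>" by (simp add: powr_powr)
    then have "1 \<le> prod_list (map cc s) powr \<beta> * 2 powr (k*\<beta>)"
      by (simp add: powr_minus field_simps)
    then show "iid q s \<le> ?F s" using iid_nn[of s] by (simp add: mult_le_cancel_left1)
  qed
  also have "\<dots> \<le> (\<Sum>s\<in>{s. length s = N}. ?F s)"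
    by (rule sum_mono2) (auto simp: finite_len iid_nn)
  also have "\<dots> = 2 powr (k*\<beta>) * (\<Sum>s\<in>{s. length s = N}. prod_list (map (\<lambda>w. q w * cc w powr \<beta>) s))"
    unfolding sum_distrib_left
    by (intro sum.cong refl) (simp add: iid_mult[symmetric] prod_list_powr mult_ac)
  also have "\<dots> = 2 powr (k*\<beta>) * (\<Sum>w\<in>UNIV. q w * cc w powr \<beta>)^N"
    by (simp add: sum_lists_prod)
  finally show ?thesis .
qed

lemma conc:
  assumes N1: "1 \<le> N"
  shows "(\<Sum>s\<in>{s. length s = N \<and> prod_list (map cc s) > 2 powr (-(real N * (cond_entropy q f g - delta_A N)))}. iid q s)
         \<le> exp (-3) / real N"
proof -
  define H where "H = cond_entropy q f g"
  define \<delta> where "\<delta> = delta_A N"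
  define k where "k = real N * (H - \<delta>)"
  define \<beta> where "\<beta> = ln 2 * \<delta> / 2"
  have d0: "0 < \<delta>" using delta_pos[OF N1] by (simp add: \<delta>_def)
  have b0: "0 < \<beta>" using d0 by (simp add: \<beta>_def)
  have Np: "0 < real N" using N1 by simp
  have lN: "0 \<le> log 2 (real N)" using N1 by simp
  have "(\<Sum>s\<in>{s. length s = N \<and> prod_list (map cc s) > 2 powr (-k)}. iid q s)
         \<le> 2 powr (k*\<beta>) * (\<Sum>w\<in>UNIV. q w * cc w powr \<beta>)^N"
    by (rule markov[OF b0])
  also have "\<dots> \<le> 2 powr (k*\<beta>) * (exp (- \<beta> * (ln 2 * H) + \<beta>^2))^N"
    using base_bound[of \<beta>] b0
    by (intro mult_left_mono power_mono) (auto simp: H_def intro!: sum_nonneg mult_nonneg_nonneg q_nn)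
  also have "\<dots> = exp (k*\<beta>*ln 2 + real N * (- \<beta> * (ln 2 * H) + \<beta>^2))"
    by (simp add: powr_def exp_add exp_of_nat_mult[symmetric] mult_ac)
  also have "k*\<beta>*ln 2 + real N * (- \<beta> * (ln 2 * H) + \<beta>^2) = - real N * (ln 2)^2 * \<delta>^2 / 4"
    by (simp add: k_def \<beta>_def field_simps power2_eq_square)
  also have "\<delta>^2 = (log 2 11)^2 * (2 / real N * (3 + log 2 (real N)))"
    unfolding \<delta>_def delta_A_def using lN Np by (simp add: power_mult_distrib)
  also have "- real N * (ln 2)^2 * ((log 2 11)^2 * (2 / real N * (3 + log 2 (real N)))) / 4
      = - ((ln 2 * log 2 11)^2) * (3 + log 2 (real N)) / 2"
    using Np by (simp add: field_simps power_mult_distrib)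
  also have "ln 2 * log 2 11 = ln (11::real)" by (simp add: log_def)
  also have "exp (- ((ln (11::real))^2) * (3 + log 2 (real N)) / 2) \<le> exp (- 3 - ln (real N))"
  proof -
    have "exp 2 \<le> (11::real)"
    proof -
      have "exp (2::real) = exp 1 * exp 1" by (simp add: exp_add[symmetric])
      also have "\<dots> \<le> 3 * 3" using exp_le by (intro mult_mono) auto
      finally show ?thesis by simp
    qed
    then have "2 \<le> ln (11::real)" by (simp add: ln_ge_iff)
    then have "2*2 \<le> ln (11::real) * ln 11" using mult_mono[of 2 "ln (11::real)" 2 "ln 11"] by simp
    then have l4: "4 \<le> (ln (11::real))^2" by (simp add: power2_eq_square)
    have "ln (real N) \<le> log 2 (real N)"
    proof -
      have "0 \<le> ln (real N)" using N1 by simp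
      moreover have "ln 2 \<le> (1::real)" using ln_le_minus_one[of 2] by simp
      moreover have "0 < ln (2::real)" by simp
      ultimately show ?thesis by (simp add: log_def field_simps mult_left_le)
    qed
    then have "3 + ln (real N) \<le> 2 * (3 + log 2 (real N))" using lN by simp
    also have "\<dots> \<le> (ln (11::real))^2 * (3 + log 2 (real N)) / 2"
    proof -
      have "4 * (3 + log 2 (real N)) \<le> (ln (11::real))^2 * (3 + log 2 (real N))"
        using l4 lN by (intro mult_right_mono) auto
      then show ?thesis by simp
    qed
    finally show ?thesis by simp
  qed
  also have "exp (- 3 - ln (real N)) = exp (-3) / real N"
    using Np by (simp add: exp_diff)
  finally show ?thesis by (simp add: k_def H_def \<delta>_def)
qed

end

definition mk4 :: "'x \<times> 'u \<times> 'v \<Rightarrow> 'z \<Rightarrow> 'x \<times> 'u \<times> 'v \<times> 'z" where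
  "mk4 t z = (fst t, fst (snd t), snd (snd t), z)"

lemma sum_4_3:
  assumes "finite A" "finite B" "finite C" "finite D"
  shows "(\<Sum>w\<in>A\<times>B\<times>C\<times>D. F w) = (\<Sum>t\<in>A\<times>B\<times>C. \<Sum>z\<in>D. F (mk4 t z))"
proof -
  have inj: "inj_on (\<lambda>(t,z). mk4 t z) ((A\<times>B\<times>C)\<times>D)"
    by (auto simp: inj_on_def mk4_def)
  have im: "(\<lambda>(t,z). mk4 t z) ` ((A\<times>B\<times>C)\<times>D) = A\<times>B\<times>C\<times>D"
    by (force simp: mk4_def image_iff)
  have "(\<Sum>t\<in>A\<times>B\<times>C. \<Sum>z\<in>D. F (mk4 t z)) = (\<Sum>(t,z)\<in>(A\<times>B\<times>C)\<times>D. F (mk4 t z))"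
    by (rule sum.cartesian_product)
  also have "\<dots> = (\<Sum>w\<in>A\<times>B\<times>C\<times>D. F w)"
    using sum.reindex[OF inj, of F] im by (simp add: case_prod_unfold)
  finally show ?thesis by simp
qed

lemma sum3:
  "(\<Sum>t\<in>A\<times>B\<times>C. F t) = (\<Sum>x\<in>A. \<Sum>u\<in>B. \<Sum>v\<in>C. F (x,u,v))"
  by (simp add: sum.cartesian_product)

lemma sumG:
  "(\<Sum>a\<in>A. \<Sum>b\<in>B. \<Sum>c\<in>C. F a b c) = (\<Sum>g\<in>A\<times>B\<times>C. F (fst g) (fst (snd g)) (snd (snd g)))"
  by (simp add: sum.cartesian_product case_prod_unfold)

lemma sum_if_out: "(\<Sum>u\<in>B. if P then f u else 0) = (if P then sum f B else (0::real))"
  by auto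

lemma if_conj0: "(if P \<and> Q then a else (0::real)) = (if P then (if Q then a else 0) else 0)"
  by auto

lemma test: "finite (A::'a set) \<Longrightarrow> finite (B::'b set) \<Longrightarrow> finite C \<Longrightarrow> x0 \<in> A \<Longrightarrow> u0 \<in> B \<Longrightarrow> (\<Sum>t\<in>A\<times>B\<times>C. if fst t = x0 \<and> fst (snd t) = u0 then F t else (0::real)) = (\<Sum>v\<in>C. F (x0,u0,v))"
  unfolding sum3 by (simp add: if_conj0 sum_if_out cong: if_cong)

locale lhl =
  fixes Xs :: "'x set" and Us :: "'u set" and Vs :: "'v set" and Zs :: "'z set"
    and Ox :: "'ox set" and Ou :: "'ou set" and Ov :: "'ov set"
    and FX :: "('x \<Rightarrow> 'ox) set" and FU :: "('u \<Rightarrow> 'ou) set" and FV :: "('v \<Rightarrow> 'ov) set"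
    and rX rU rV :: nat and \<theta> :: real and P :: "'x \<times> 'u \<times> 'v \<times> 'z \<Rightarrow> real"
  assumes finX: "finite Xs" and finU: "finite Us" and finV: "finite Vs" and finZ: "finite Zs"
    and Pnn: "\<And>w. 0 \<le> P w"
    and Psum: "(\<Sum>w\<in>Xs\<times>Us\<times>Vs\<times>Zs. P w) = 1"
    and FXfin: "finite FX" and FXne: "FX \<noteq> {}" and FXmap: "\<And>g x. g \<in> FX \<Longrightarrow> x \<in> Xs \<Longrightarrow> g x \<in> Ox"
    and cOx: "card Ox = 2^rX"
    and uX: "\<And>x x'. x \<in> Xs \<Longrightarrow> x' \<in> Xs \<Longrightarrow> x \<noteq> x' \<Longrightarrow> real (card {g\<in>FX. g x = g x'}) \<le> real (card FX) / 2^rX"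
    and FUfin: "finite FU" and FUne: "FU \<noteq> {}" and FUmap: "\<And>g x. g \<in> FU \<Longrightarrow> x \<in> Us \<Longrightarrow> g x \<in> Ou"
    and cOu: "card Ou = 2^rU"
    and uU: "\<And>x x'. x \<in> Us \<Longrightarrow> x' \<in> Us \<Longrightarrow> x \<noteq> x' \<Longrightarrow> real (card {g\<in>FU. g x = g x'}) \<le> real (card FU) / 2^rU"
    and FVfin: "finite FV" and FVne: "FV \<noteq> {}" and FVmap: "\<And>g x. g \<in> FV \<Longrightarrow> x \<in> Vs \<Longrightarrow> g x \<in> Ov"
    and cOv: "card Ov = 2^rV"
    and uV: "\<And>x x'. x \<in> Vs \<Longrightarrow> x' \<in> Vs \<Longrightarrow> x \<noteq> x' \<Longrightarrow> real (card {g\<in>FV. g x = g x'}) \<le> real (card FV) / 2^rV"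
    and th0: "0 \<le> \<theta>"
begin

definition "QXUZ x u z = (\<Sum>v\<in>Vs. P (x,u,v,z))"
definition "QUZ u z = (\<Sum>x\<in>Xs. QXUZ x u z)"
definition "QZ z = (\<Sum>u\<in>Us. QUZ u z)"
definition "aX = 2 powr (-(real rX + \<theta>))"
definition "aU = 2 powr (-(real rU + \<theta>))"
definition "aV = 2 powr (-(real rV + \<theta>))"
definition "TX x u z \<longleftrightarrow> QXUZ x u z \<le> aX * QUZ u z"
definition "TU u z \<longleftrightarrow> QUZ u z \<le> aU * QZ z"
definition "TV x u v z \<longleftrightarrow> P (x,u,v,z) \<le> aV * QXUZ x u z"
definition "Tg w \<longleftrightarrow> (case w of (x,u,v,z) \<Rightarrow> TX x u z \<and> TU u z \<and> TV x u v z)"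
definition "P1 w = (if Tg w then P w else 0)"
definition "P2 w = (if Tg w then 0 else P w)"

lemma QXUZ_nn: "0 \<le> QXUZ x u z" unfolding QXUZ_def by (intro sum_nonneg Pnn)
lemma QUZ_nn: "0 \<le> QUZ u z" unfolding QUZ_def by (intro sum_nonneg QXUZ_nn)
lemma QZ_nn: "0 \<le> QZ z" unfolding QZ_def by (intro sum_nonneg QUZ_nn)
lemma aX_nn: "0 \<le> aX" unfolding aX_def by simp
lemma aU_nn: "0 \<le> aU" unfolding aU_def by simp
lemma aV_nn: "0 \<le> aV" unfolding aV_def by simp
lemma P1_nn: "0 \<le> P1 w" unfolding P1_def using Pnn by simp
lemma P2_nn: "0 \<le> P2 w" unfolding P2_def using Pnn by simp
lemma P1_le: "P1 w \<le> P w" unfolding P1_def using Pnn by simp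
lemma P12: "P w = P1 w + P2 w" unfolding P1_def P2_def by simp

lemma P1_eq: "P1 (x,u,v,z) = (if TX x u z \<and> TU u z \<and> TV x u v z then P (x,u,v,z) else 0)"
  unfolding P1_def Tg_def by simp

lemma h1: "P1 (x,u,v,z) \<le> (if TX x u z \<and> TU u z then P (x,u,v,z) else 0)"
  unfolding P1_eq using Pnn by auto
lemma aVQ_nn: "0 \<le> aV * QXUZ x u z" by (intro mult_nonneg_nonneg aV_nn QXUZ_nn)
lemma h2: "P1 (x,u,v,z) \<le> (if TX x u z \<and> TU u z then aV * QXUZ x u z else 0)"
  unfolding P1_eq TV_def using Pnn aVQ_nn[of x u z] by auto
lemma h2': "P1 (x,u,v,z) \<le> aV * QXUZ x u z"
  using h2[of x u v z] aVQ_nn[of x u z] by (auto split: if_splits)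
lemma h2X: "P1 (x,u,v,z) \<le> aV * (if TX x u z then QXUZ x u z else 0)"
  unfolding P1_eq TV_def using Pnn aVQ_nn[of x u z] aV_nn by auto
lemma h2U: "P1 (x,u,v,z) \<le> aV * (if TU u z then QXUZ x u z else 0)"
  unfolding P1_eq TV_def using Pnn aVQ_nn[of x u z] aV_nn by auto
lemma h1X: "P1 (x,u,v,z) \<le> (if TX x u z then P (x,u,v,z) else 0)"
  unfolding P1_eq using Pnn by auto
lemma h1U: "P1 (x,u,v,z) \<le> (if TU u z then P (x,u,v,z) else 0)"
  unfolding P1_eq using Pnn by auto
lemma h3: "(if TX x u z then QXUZ x u z else 0) \<le> aX * QUZ u z"
  unfolding TX_def using aX_nn QUZ_nn[of u z] by (auto intro: mult_nonneg_nonneg)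
lemma h4: "(if TU u z then QUZ u z else 0) \<le> aU * QZ z"
  unfolding TU_def using aU_nn QZ_nn[of z] by (auto intro: mult_nonneg_nonneg)

lemma K_X: "(\<Sum>u\<in>Us. \<Sum>v\<in>Vs. P1 (x0,u,v,z)) \<le> aX * QZ z"
proof -
  have "(\<Sum>u\<in>Us. \<Sum>v\<in>Vs. P1 (x0,u,v,z)) \<le> (\<Sum>u\<in>Us. if TX x0 u z then QXUZ x0 u z else 0)"
  proof (rule sum_mono)
    fix u
    have "(\<Sum>v\<in>Vs. P1 (x0,u,v,z)) \<le> (\<Sum>v\<in>Vs. if TX x0 u z then P (x0,u,v,z) else 0)"
      by (rule sum_mono) (rule h1X)
    also have "\<dots> = (if TX x0 u z then QXUZ x0 u z else 0)" by (simp add: QXUZ_def)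
    finally show "(\<Sum>v\<in>Vs. P1 (x0,u,v,z)) \<le> (if TX x0 u z then QXUZ x0 u z else 0)" .
  qed
  also have "\<dots> \<le> (\<Sum>u\<in>Us. aX * QUZ u z)" by (rule sum_mono) (rule h3)
  also have "\<dots> = aX * QZ z" by (simp add: QZ_def sum_distrib_left)
  finally show ?thesis .
qed

lemma K_U: "(\<Sum>x\<in>Xs. \<Sum>v\<in>Vs. P1 (x,u0,v,z)) \<le> aU * QZ z"
proof -
  have "(\<Sum>x\<in>Xs. \<Sum>v\<in>Vs. P1 (x,u0,v,z)) \<le> (\<Sum>x\<in>Xs. if TU u0 z then QXUZ x u0 z else 0)"
  proof (rule sum_mono)
    fix x
    have "(\<Sum>v\<in>Vs. P1 (x,u0,v,z)) \<le> (\<Sum>v\<in>Vs. if TU u0 z then P (x,u0,v,z) else 0)"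
      by (rule sum_mono) (rule h1U)
    also have "\<dots> = (if TU u0 z then QXUZ x u0 z else 0)" by (simp add: QXUZ_def)
    finally show "(\<Sum>v\<in>Vs. P1 (x,u0,v,z)) \<le> (if TU u0 z then QXUZ x u0 z else 0)" .
  qed
  also have "\<dots> = (if TU u0 z then QUZ u0 z else 0)" by (simp add: QUZ_def)
  also have "\<dots> \<le> aU * QZ z" by (rule h4)
  finally show ?thesis .
qed

lemma K_V: "(\<Sum>x\<in>Xs. \<Sum>u\<in>Us. P1 (x,u,v0,z)) \<le> aV * QZ z"
proof -
  have "(\<Sum>x\<in>Xs. \<Sum>u\<in>Us. P1 (x,u,v0,z)) \<le> (\<Sum>x\<in>Xs. \<Sum>u\<in>Us. aV * QXUZ x u z)"
    by (intro sum_mono h2')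
  also have "\<dots> = aV * (\<Sum>u\<in>Us. \<Sum>x\<in>Xs. QXUZ x u z)"
    by (simp add: sum_distrib_left sum.swap[of _ Xs])
  also have "\<dots> = aV * QZ z" by (simp add: QZ_def QUZ_def)
  finally show ?thesis .
qed

lemma K_XU: "(\<Sum>v\<in>Vs. P1 (x0,u0,v,z)) \<le> aX * aU * QZ z"
proof -
  have "(\<Sum>v\<in>Vs. P1 (x0,u0,v,z)) \<le> (\<Sum>v\<in>Vs. if TX x0 u0 z \<and> TU u0 z then P (x0,u0,v,z) else 0)"
    by (rule sum_mono) (rule h1)
  also have "\<dots> = (if TX x0 u0 z \<and> TU u0 z then QXUZ x0 u0 z else 0)" by (simp only: sum_if_out QXUZ_def)
  also have "\<dots> \<le> aX * (if TU u0 z then QUZ u0 z else 0)"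
    using h3[of x0 u0 z] aX_nn QXUZ_nn[of x0 u0 z] by (auto split: if_splits)
  also have "\<dots> \<le> aX * (aU * QZ z)" by (intro mult_left_mono h4 aX_nn)
  finally show ?thesis by (simp add: mult_ac)
qed

lemma K_XV: "(\<Sum>u\<in>Us. P1 (x0,u,v0,z)) \<le> aX * aV * QZ z"
proof -
  have "(\<Sum>u\<in>Us. P1 (x0,u,v0,z)) \<le> (\<Sum>u\<in>Us. aV * (if TX x0 u z then QXUZ x0 u z else 0))"
    by (rule sum_mono) (rule h2X)
  also have "\<dots> \<le> (\<Sum>u\<in>Us. aV * (aX * QUZ u z))"
    by (intro sum_mono mult_left_mono h3 aV_nn)
  also have "\<dots> = aX * aV * QZ z" by (simp add: QZ_def sum_distrib_left mult_ac)
  finally show ?thesis .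
qed

lemma K_UV: "(\<Sum>x\<in>Xs. P1 (x,u0,v0,z)) \<le> aU * aV * QZ z"
proof -
  have "(\<Sum>x\<in>Xs. P1 (x,u0,v0,z)) \<le> (\<Sum>x\<in>Xs. aV * (if TU u0 z then QXUZ x u0 z else 0))"
    by (rule sum_mono) (rule h2U)
  also have "\<dots> = aV * (if TU u0 z then QUZ u0 z else 0)"
    by (simp add: QUZ_def sum_distrib_left)
  also have "\<dots> \<le> aV * (aU * QZ z)" by (intro mult_left_mono h4 aV_nn)
  finally show ?thesis by (simp add: mult_ac)
qed

lemma K_XUV: "P1 (x0,u0,v0,z) \<le> aX * aU * aV * QZ z"
proof -
  have "P1 (x0,u0,v0,z) \<le> aV * (if TX x0 u0 z \<and> TU u0 z then QXUZ x0 u0 z else 0)"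
    using h2[of x0 u0 v0 z] aV_nn by (auto split: if_splits)
  also have "\<dots> \<le> aV * (aX * (if TU u0 z then QUZ u0 z else 0))"
    using h3[of x0 u0 z] aX_nn QXUZ_nn[of x0 u0 z] aV_nn
    by (intro mult_left_mono) (auto split: if_splits)
  also have "\<dots> \<le> aV * (aX * (aU * QZ z))" by (intro mult_left_mono h4 aV_nn aX_nn)
  finally show ?thesis by (simp add: mult_ac)
qed

end

context lhl begin

definition "O3 = Ox \<times> Ou \<times> Ov"
definition "W3 = Xs \<times> Us \<times> Vs"
definition "GG = FX \<times> FU \<times> FV"
definition "nG = real (card FX) * real (card FU) * real (card FV)"
definition "hv g t = (fst g (fst t), fst (snd g) (fst (snd t)), snd (snd g) (snd (snd t)))"
definition "AA g y z = (\<Sum>t\<in>W3. if hv g t = y then P1 (mk4 t z) else 0)"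
definition "BB g y z = (\<Sum>t\<in>W3. if hv g t = y then P2 (mk4 t z) else 0)"
definition "m1 z = (\<Sum>t\<in>W3. P1 (mk4 t z))"
definition "m2 z = (\<Sum>t\<in>W3. P2 (mk4 t z))"
definition "eps = 2 powr (-\<theta>)"

lemma finO3: "finite O3"
proof -
  have "card Ox > 0" "card Ou > 0" "card Ov > 0" using cOx cOu cOv by auto
  then show ?thesis unfolding O3_def by (auto dest: card_ge_0_finite)
qed
lemma finW3: "finite W3" unfolding W3_def using finX finU finV by simp
lemma finGG: "finite GG" unfolding GG_def using FXfin FUfin FVfin by simp
lemma cardO3: "real (card O3) = 2^(rX+rU+rV)"
  unfolding O3_def by (simp add: card_cartesian_product cOx cOu cOv power_add)
lemma cardGG: "real (card GG) = nG"
  unfolding GG_def nG_def by (simp add: card_cartesian_product)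
lemma nG_pos: "0 < nG"
  unfolding nG_def using FXfin FXne FUfin FUne FVfin FVne by (simp add: card_gt_0_iff)

lemma hv_in: "g \<in> GG \<Longrightarrow> t \<in> W3 \<Longrightarrow> hv g t \<in> O3"
  unfolding GG_def W3_def O3_def hv_def using FXmap FUmap FVmap by (auto simp: mem_Times_iff)

lemma sum_ind_O: assumes "g \<in> GG" "t \<in> W3"
  shows "(\<Sum>y\<in>O3. if hv g t = y then c else (0::real)) = c"
  using hv_in[OF assms] finO3 by simp

lemma sumA: assumes "g \<in> GG" shows "(\<Sum>y\<in>O3. AA g y z) = m1 z"
proof -
  have "(\<Sum>y\<in>O3. AA g y z) = (\<Sum>t\<in>W3. \<Sum>y\<in>O3. if hv g t = y then P1 (mk4 t z) else 0)"
    unfolding AA_def by (rule sum.swap)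
  also have "\<dots> = m1 z" unfolding m1_def using sum_ind_O[OF assms] by simp
  finally show ?thesis .
qed

lemma sumB: assumes "g \<in> GG" shows "(\<Sum>y\<in>O3. BB g y z) = m2 z"
proof -
  have "(\<Sum>y\<in>O3. BB g y z) = (\<Sum>t\<in>W3. \<Sum>y\<in>O3. if hv g t = y then P2 (mk4 t z) else 0)"
    unfolding BB_def by (rule sum.swap)
  also have "\<dots> = m2 z" unfolding m2_def using sum_ind_O[OF assms] by simp
  finally show ?thesis .
qed

lemma delta2: "finite S \<Longrightarrow> a \<in> S \<Longrightarrow> (\<Sum>y\<in>S. if a = y then (if b = y then c else 0) else (0::real)) = (if a = b then c else 0)"
proof -
  assume "finite S" "a \<in> S"
  have "(\<Sum>y\<in>S. if a = y then (if b = y then c else 0) else (0::real)) = (\<Sum>y\<in>S. if a = y then (if a = b then c else 0) else 0)"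
    by (rule sum.cong) auto
  then show ?thesis using \<open>finite S\<close> \<open>a \<in> S\<close> by simp
qed

lemma sumA2: assumes "g \<in> GG"
  shows "(\<Sum>y\<in>O3. (AA g y z)^2) = (\<Sum>t\<in>W3. \<Sum>t'\<in>W3. if hv g t = hv g t' then P1 (mk4 t z) * P1 (mk4 t' z) else 0)"
proof -
  have "(\<Sum>y\<in>O3. (AA g y z)^2) = (\<Sum>y\<in>O3. \<Sum>t\<in>W3. \<Sum>t'\<in>W3. if hv g t = y then (if hv g t' = y then P1 (mk4 t z) * P1 (mk4 t' z) else 0) else 0)"
    unfolding AA_def power2_eq_square sum_product by (intro sum.cong refl) auto
  also have "\<dots> = (\<Sum>t\<in>W3. \<Sum>t'\<in>W3. \<Sum>y\<in>O3. if hv g t = y then (if hv g t' = y then P1 (mk4 t z) * P1 (mk4 t' z) else 0) else 0)"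
    by (simp add: sum.swap[of _ O3])
  also have "\<dots> = (\<Sum>t\<in>W3. \<Sum>t'\<in>W3. if hv g t = hv g t' then P1 (mk4 t z) * P1 (mk4 t' z) else 0)"
    by (intro sum.cong refl) (simp add: delta2[OF finO3 hv_in[OF assms]])
  finally show ?thesis .
qed

lemma C1: assumes "g \<in> GG"
  shows "(\<Sum>y\<in>O3. (AA g y z - m1 z / 2^(rX+rU+rV))^2)
       = (\<Sum>t\<in>W3. \<Sum>t'\<in>W3. if hv g t = hv g t' then P1 (mk4 t z) * P1 (mk4 t' z) else 0) - (m1 z)^2 / 2^(rX+rU+rV)"
proof -
  let ?c = "m1 z / 2^(rX+rU+rV)"
  have "(\<Sum>y\<in>O3. (AA g y z - ?c)^2) = (\<Sum>y\<in>O3. (AA g y z)^2) - 2 * ?c * (\<Sum>y\<in>O3. AA g y z) + real (card O3) * ?c^2"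
    by (simp add: power2_diff sum.distrib sum_subtractf sum_distrib_left sum_divide_distrib mult_ac)
  also have "\<dots> = (\<Sum>y\<in>O3. (AA g y z)^2) - (m1 z)^2 / 2^(rX+rU+rV)"
    unfolding sumA[OF assms] cardO3 by (simp add: power2_eq_square field_simps)
  finally show ?thesis unfolding sumA2[OF assms] .
qed

end

lemma mult_if0: "a * (if P then c else 0) = (if P then c * a else (0::real))" by simp
lemma if_mult0: "(if P then c else 0) * a = (if P then c * a else (0::real))" by simp

context lhl begin

lemma S_X: "x0 \<in> Xs \<Longrightarrow> (\<Sum>t\<in>W3. P1 (mk4 t z) * (if x0 = fst t then c else 0)) = c * (\<Sum>u\<in>Us. \<Sum>v\<in>Vs. P1 (x0,u,v,z))"
  unfolding W3_def sum3 using finX finU finV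
  by (simp add: mk4_def mult_if0 if_mult0 if_conj0 sum_if_out sum_distrib_left cong: if_cong)
lemma S_U: "u0 \<in> Us \<Longrightarrow> (\<Sum>t\<in>W3. P1 (mk4 t z) * (if u0 = fst (snd t) then c else 0)) = c * (\<Sum>x\<in>Xs. \<Sum>v\<in>Vs. P1 (x,u0,v,z))"
  unfolding W3_def sum3 using finX finU finV
  by (simp add: mk4_def mult_if0 if_mult0 if_conj0 sum_if_out sum_distrib_left cong: if_cong)
lemma S_V: "v0 \<in> Vs \<Longrightarrow> (\<Sum>t\<in>W3. P1 (mk4 t z) * (if v0 = snd (snd t) then c else 0)) = c * (\<Sum>x\<in>Xs. \<Sum>u\<in>Us. P1 (x,u,v0,z))"
  unfolding W3_def sum3 using finX finU finV
  by (simp add: mk4_def mult_if0 if_mult0 if_conj0 sum_if_out sum_distrib_left cong: if_cong)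
lemma S_XU: "x0 \<in> Xs \<Longrightarrow> u0 \<in> Us \<Longrightarrow> (\<Sum>t\<in>W3. P1 (mk4 t z) * (if x0 = fst t \<and> u0 = fst (snd t) then c else 0)) = c * (\<Sum>v\<in>Vs. P1 (x0,u0,v,z))"
  unfolding W3_def sum3 using finX finU finV
  by (simp add: mk4_def mult_if0 if_mult0 if_conj0 sum_if_out sum_distrib_left cong: if_cong)
lemma S_XV: "x0 \<in> Xs \<Longrightarrow> v0 \<in> Vs \<Longrightarrow> (\<Sum>t\<in>W3. P1 (mk4 t z) * (if x0 = fst t \<and> v0 = snd (snd t) then c else 0)) = c * (\<Sum>u\<in>Us. P1 (x0,u,v0,z))"
  unfolding W3_def sum3 using finX finU finV
  by (simp add: mk4_def mult_if0 if_mult0 if_conj0 sum_if_out sum_distrib_left cong: if_cong)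
lemma S_UV: "u0 \<in> Us \<Longrightarrow> v0 \<in> Vs \<Longrightarrow> (\<Sum>t\<in>W3. P1 (mk4 t z) * (if u0 = fst (snd t) \<and> v0 = snd (snd t) then c else 0)) = c * (\<Sum>x\<in>Xs. P1 (x,u0,v0,z))"
  unfolding W3_def sum3 using finX finU finV
  by (simp add: mk4_def mult_if0 if_mult0 if_conj0 sum_if_out sum_distrib_left cong: if_cong)
lemma S_XUV: "x0 \<in> Xs \<Longrightarrow> u0 \<in> Us \<Longrightarrow> v0 \<in> Vs \<Longrightarrow> (\<Sum>t\<in>W3. P1 (mk4 t z) * (if x0 = fst t \<and> u0 = fst (snd t) \<and> v0 = snd (snd t) then c else 0)) = c * P1 (x0,u0,v0,z)"
  unfolding W3_def sum3 using finX finU finV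
  by (simp add: mk4_def mult_if0 if_mult0 if_conj0 sum_if_out sum_distrib_left cong: if_cong)

end

context lhl begin

definition "cf7 eX eU eV = (if eX then 1 else 1/2^rX) * (if eU then 1 else 1/2^rU) * (if eV then 1 else (1::real)/2^rV)"
definition "K7 eX eU eV = (if eX then 2^rX else 0) + (if eU then 2^rU else 0) + (if eV then 2^rV else 0)
   + (if eX \<and> eU then 2^rX * 2^rU else 0) + (if eX \<and> eV then 2^rX * 2^rV else 0)
   + (if eU \<and> eV then 2^rU * 2^rV else 0) + (if eX \<and> eU \<and> eV then 2^rX * 2^rU * 2^rV else (0::real))"

lemma C3: "2^(rX+rU+rV) * cf7 eX eU eV - 1 \<le> K7 eX eU eV"
proof -
  have a: "(1::real) \<le> 2^rX" "(1::real) \<le> 2^rU" "(1::real) \<le> 2^rV" by simp_all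
  have p: "(1::real) \<le> 2^rX * 2^rU" "(1::real) \<le> 2^rX * 2^rV" "(1::real) \<le> 2^rU * 2^rV"
    by (simp_all flip: power_add)
  have q: "(1::real) \<le> 2^rX * 2^rU * 2^rV" by (simp flip: power_add)
  show ?thesis
    unfolding cf7_def K7_def power_add using a p q
    by (cases eX; cases eU; cases eV) (simp_all add: field_simps)
qed

lemma cardX: "x \<in> Xs \<Longrightarrow> x' \<in> Xs \<Longrightarrow> real (card {g\<in>FX. g x = g x'}) \<le> real (card FX) * (if x = x' then 1 else 1/2^rX)"
  using uX[of x x'] by (cases "x = x'") auto
lemma cardU: "x \<in> Us \<Longrightarrow> x' \<in> Us \<Longrightarrow> real (card {g\<in>FU. g x = g x'}) \<le> real (card FU) * (if x = x' then 1 else 1/2^rU)"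
  using uU[of x x'] by (cases "x = x'") auto
lemma cardV: "x \<in> Vs \<Longrightarrow> x' \<in> Vs \<Longrightarrow> real (card {g\<in>FV. g x = g x'}) \<le> real (card FV) * (if x = x' then 1 else 1/2^rV)"
  using uV[of x x'] by (cases "x = x'") auto

lemma C2: assumes "t \<in> W3" "t' \<in> W3" "0 \<le> c"
  shows "(\<Sum>g\<in>GG. if hv g t = hv g t' then c else 0)
     \<le> c * nG * cf7 (fst t = fst t') (fst (snd t) = fst (snd t')) (snd (snd t) = snd (snd t'))"
proof -
  obtain x u v where t: "t = (x,u,v)" by (cases t) auto
  obtain x' u' v' where t': "t' = (x',u',v')" by (cases t') auto
  have mem: "x \<in> Xs" "u \<in> Us" "v \<in> Vs" "x' \<in> Xs" "u' \<in> Us" "v' \<in> Vs"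
    using assms t t' by (auto simp: W3_def)
  have "{g\<in>GG. hv g t = hv g t'} = {g\<in>FX. g x = g x'} \<times> {g\<in>FU. g u = g u'} \<times> {g\<in>FV. g v = g v'}"
    by (auto simp: GG_def hv_def t t')
  then have cardeq: "real (card {g\<in>GG. hv g t = hv g t'}) = real (card {g\<in>FX. g x = g x'}) * real (card {g\<in>FU. g u = g u'}) * real (card {g\<in>FV. g v = g v'})"
    by (simp add: card_cartesian_product)
  have "(\<Sum>g\<in>GG. if hv g t = hv g t' then c else 0) = c * real (card {g\<in>GG. hv g t = hv g t'})"
    using finGG by (simp add: sum.inter_filter[symmetric])
  also have "\<dots> \<le> c * ((real (card FX) * (if x = x' then 1 else 1/2^rX)) * (real (card FU) * (if u = u' then 1 else 1/2^rU)) * (real (card FV) * (if v = v' then 1 else 1/2^rV)))"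
    unfolding cardeq using assms(3) cardX[OF mem(1,4)] cardU[OF mem(2,5)] cardV[OF mem(3,6)]
    by (intro mult_left_mono mult_mono) auto
  also have "\<dots> = c * nG * cf7 (fst t = fst t') (fst (snd t) = fst (snd t')) (snd (snd t) = snd (snd t'))"
    by (simp add: t t' nG_def cf7_def mult_ac)
  finally show ?thesis .
qed

lemma eps_le1: "eps \<le> 1"
proof -
  have "2 powr (-\<theta>) \<le> (2::real) powr 0" using th0 by (intro powr_mono) auto
  then show ?thesis unfolding eps_def by simp
qed
lemma eps_nn: "0 \<le> eps" unfolding eps_def by simp

lemma pw: "(2::real)^r * 2 powr (-(real r + \<theta>)) = eps"
  unfolding eps_def by (simp add: powr_realpow[symmetric] powr_add[symmetric])

lemma C4: assumes "t \<in> W3"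
  shows "(\<Sum>t'\<in>W3. P1 (mk4 t' z) * K7 (fst t = fst t') (fst (snd t) = fst (snd t')) (snd (snd t) = snd (snd t'))) \<le> 7 * eps * QZ z"
proof -
  obtain x0 u0 v0 where t: "t = (x0,u0,v0)" by (cases t) auto
  have mem: "x0 \<in> Xs" "u0 \<in> Us" "v0 \<in> Vs" using assms t by (auto simp: W3_def)
  let ?f = "\<lambda>t'. P1 (mk4 t' z)"
  have split: "(\<Sum>t'\<in>W3. ?f t' * K7 (x0 = fst t') (u0 = fst (snd t')) (v0 = snd (snd t')))
    = (\<Sum>t'\<in>W3. ?f t' * (if x0 = fst t' then 2^rX else 0))
    + (\<Sum>t'\<in>W3. ?f t' * (if u0 = fst (snd t') then 2^rU else 0))
    + (\<Sum>t'\<in>W3. ?f t' * (if v0 = snd (snd t') then 2^rV else 0))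
    + (\<Sum>t'\<in>W3. ?f t' * (if x0 = fst t' \<and> u0 = fst (snd t') then 2^rX * 2^rU else 0))
    + (\<Sum>t'\<in>W3. ?f t' * (if x0 = fst t' \<and> v0 = snd (snd t') then 2^rX * 2^rV else 0))
    + (\<Sum>t'\<in>W3. ?f t' * (if u0 = fst (snd t') \<and> v0 = snd (snd t') then 2^rU * 2^rV else 0))
    + (\<Sum>t'\<in>W3. ?f t' * (if x0 = fst t' \<and> u0 = fst (snd t') \<and> v0 = snd (snd t') then 2^rX * 2^rU * 2^rV else 0))"
    unfolding K7_def by (simp only: distrib_left sum.distrib)
  have Q: "0 \<le> QZ z" by (rule QZ_nn)
  have e1: "2^rX * (\<Sum>u\<in>Us. \<Sum>v\<in>Vs. P1 (x0,u,v,z)) \<le> eps * QZ z"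
  proof -
    have "2^rX * (\<Sum>u\<in>Us. \<Sum>v\<in>Vs. P1 (x0,u,v,z)) \<le> 2^rX * (aX * QZ z)" by (intro mult_left_mono K_X[of x0 z]) simp
    also have "\<dots> = (2^rX * aX) * QZ z" by (simp add: mult_ac)
    also have "\<dots> = eps * QZ z" using pw[of rX] by (simp add: aX_def)
    finally show ?thesis .
  qed
  have e2: "2^rU * (\<Sum>x\<in>Xs. \<Sum>v\<in>Vs. P1 (x,u0,v,z)) \<le> eps * QZ z"
  proof -
    have "2^rU * (\<Sum>x\<in>Xs. \<Sum>v\<in>Vs. P1 (x,u0,v,z)) \<le> 2^rU * (aU * QZ z)" by (intro mult_left_mono K_U[of u0 z]) simp
    also have "\<dots> = (2^rU * aU) * QZ z" by (simp add: mult_ac)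
    also have "\<dots> = eps * QZ z" using pw[of rU] by (simp add: aU_def)
    finally show ?thesis .
  qed
  have e3: "2^rV * (\<Sum>x\<in>Xs. \<Sum>u\<in>Us. P1 (x,u,v0,z)) \<le> eps * QZ z"
  proof -
    have "2^rV * (\<Sum>x\<in>Xs. \<Sum>u\<in>Us. P1 (x,u,v0,z)) \<le> 2^rV * (aV * QZ z)" by (intro mult_left_mono K_V[of v0 z]) simp
    also have "\<dots> = (2^rV * aV) * QZ z" by (simp add: mult_ac)
    also have "\<dots> = eps * QZ z" using pw[of rV] by (simp add: aV_def)
    finally show ?thesis .
  qed
  have ee: "eps * eps \<le> eps" using eps_le1 eps_nn by (simp add: mult_left_le)
  have eee: "eps * eps * eps \<le> eps"
  proof -
    have "eps * eps * eps \<le> eps * eps" using eps_le1 eps_nn by (simp add: mult_left_le)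
    then show ?thesis using ee by linarith
  qed
  have e4: "2^rX * 2^rU * (\<Sum>v\<in>Vs. P1 (x0,u0,v,z)) \<le> eps * QZ z"
  proof -
    have "2^rX * 2^rU * (\<Sum>v\<in>Vs. P1 (x0,u0,v,z)) \<le> 2^rX * 2^rU * (aX * aU * QZ z)"
      by (intro mult_left_mono K_XU) simp
    also have "\<dots> = (2^rX * aX) * (2^rU * aU) * QZ z" by (simp add: mult_ac)
    also have "\<dots> = eps * eps * QZ z" using pw[of rX] pw[of rU] by (simp add: aX_def aU_def)
    also have "\<dots> \<le> eps * QZ z" using ee Q by (intro mult_right_mono) auto
    finally show ?thesis .
  qed
  have e5: "2^rX * 2^rV * (\<Sum>u\<in>Us. P1 (x0,u,v0,z)) \<le> eps * QZ z"
  proof -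
    have "2^rX * 2^rV * (\<Sum>u\<in>Us. P1 (x0,u,v0,z)) \<le> 2^rX * 2^rV * (aX * aV * QZ z)"
      by (intro mult_left_mono K_XV) simp
    also have "\<dots> = (2^rX * aX) * (2^rV * aV) * QZ z" by (simp add: mult_ac)
    also have "\<dots> = eps * eps * QZ z" using pw[of rX] pw[of rV] by (simp add: aX_def aV_def)
    also have "\<dots> \<le> eps * QZ z" using ee Q by (intro mult_right_mono) auto
    finally show ?thesis .
  qed
  have e6: "2^rU * 2^rV * (\<Sum>x\<in>Xs. P1 (x,u0,v0,z)) \<le> eps * QZ z"
  proof -
    have "2^rU * 2^rV * (\<Sum>x\<in>Xs. P1 (x,u0,v0,z)) \<le> 2^rU * 2^rV * (aU * aV * QZ z)"
      by (intro mult_left_mono K_UV) simp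
    also have "\<dots> = (2^rU * aU) * (2^rV * aV) * QZ z" by (simp add: mult_ac)
    also have "\<dots> = eps * eps * QZ z" using pw[of rU] pw[of rV] by (simp add: aU_def aV_def)
    also have "\<dots> \<le> eps * QZ z" using ee Q by (intro mult_right_mono) auto
    finally show ?thesis .
  qed
  have e7: "2^rX * 2^rU * 2^rV * P1 (x0,u0,v0,z) \<le> eps * QZ z"
  proof -
    have "2^rX * 2^rU * 2^rV * P1 (x0,u0,v0,z) \<le> 2^rX * 2^rU * 2^rV * (aX * aU * aV * QZ z)"
      by (intro mult_left_mono K_XUV) simp
    also have "\<dots> = (2^rX * aX) * (2^rU * aU) * (2^rV * aV) * QZ z" by (simp add: mult_ac)
    also have "\<dots> = eps * eps * eps * QZ z" using pw[of rX] pw[of rU] pw[of rV] by (simp add: aX_def aU_def aV_def)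
    also have "\<dots> \<le> eps * QZ z" using eee Q by (intro mult_right_mono) auto
    finally show ?thesis .
  qed
  show ?thesis
    unfolding t fst_conv snd_conv split
    unfolding S_X[OF mem(1)] S_U[OF mem(2)] S_V[OF mem(3)] S_XU[OF mem(1,2)] S_XV[OF mem(1,3)]
      S_UV[OF mem(2,3)] S_XUV[OF mem(1,2,3)]
    using e1 e2 e3 e4 e5 e6 e7 by simp
qed

end

lemma amgm: fixes a W :: real assumes "0 < W" shows "\<bar>a\<bar> \<le> W/2 + a^2/(2*W)"
proof -
  have "0 \<le> (\<bar>a\<bar> - W)^2" by simp
  then have "2 * \<bar>a\<bar> * W \<le> a^2 + W^2" by (simp add: power2_diff power2_abs algebra_simps)
  then show ?thesis using assms by (simp add: field_simps power2_eq_square)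
qed

context lhl begin

abbreviation "RR \<equiv> (2::real)^(rX+rU+rV)"

lemma m1_nn: "0 \<le> m1 z" unfolding m1_def by (intro sum_nonneg P1_nn)
lemma AA_nn: "0 \<le> AA g y z" unfolding AA_def using P1_nn by (intro sum_nonneg) auto
lemma AA_le: "AA g y z \<le> m1 z" unfolding AA_def m1_def using P1_nn by (intro sum_mono) auto

lemma QZ_eq: "QZ z = (\<Sum>t\<in>W3. P (mk4 t z))"
  unfolding QZ_def QUZ_def QXUZ_def W3_def sum3 mk4_def by (simp add: sum.swap[of _ Xs])

lemma m1_le: "m1 z \<le> QZ z" unfolding QZ_eq m1_def by (intro sum_mono P1_le)

lemma sum_QZ: "(\<Sum>z\<in>Zs. QZ z) = 1"
proof -
  have "(\<Sum>z\<in>Zs. QZ z) = (\<Sum>t\<in>W3. \<Sum>z\<in>Zs. P (mk4 t z))" unfolding QZ_eq by (rule sum.swap)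
  also have "\<dots> = 1" using Psum sum_4_3[OF finX finU finV finZ, of P] by (simp add: W3_def)
  finally show ?thesis .
qed

lemma sum_m1: "(\<Sum>z\<in>Zs. m1 z) \<le> 1"
  using sum_mono[of Zs m1 QZ, OF m1_le] sum_QZ by simp

lemma coll: "(\<Sum>g\<in>GG. \<Sum>y\<in>O3. (AA g y z - m1 z / RR)^2) \<le> nG / RR * (7 * eps * QZ z * m1 z)"
proof -
  let ?f = "\<lambda>t. P1 (mk4 t z)"
  let ?e = "\<lambda>t t'. (fst t = fst t')"
  let ?cf = "\<lambda>t t'. cf7 (fst t = fst t') (fst (snd t) = fst (snd t')) (snd (snd t) = snd (snd t'))"
  let ?K = "\<lambda>t t'. K7 (fst t = fst t') (fst (snd t) = fst (snd t')) (snd (snd t) = snd (snd t'))"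
  have fnn: "\<And>t. 0 \<le> ?f t" by (rule P1_nn)
  have msq: "(m1 z)^2 = (\<Sum>t\<in>W3. \<Sum>t'\<in>W3. ?f t * ?f t')"
    unfolding m1_def power2_eq_square sum_product ..
  have "(\<Sum>g\<in>GG. \<Sum>y\<in>O3. (AA g y z - m1 z / RR)^2)
      = (\<Sum>g\<in>GG. (\<Sum>t\<in>W3. \<Sum>t'\<in>W3. if hv g t = hv g t' then ?f t * ?f t' else 0) - (m1 z)^2 / RR)"
    by (intro sum.cong refl C1)
  also have "\<dots> = (\<Sum>t\<in>W3. \<Sum>t'\<in>W3. \<Sum>g\<in>GG. if hv g t = hv g t' then ?f t * ?f t' else 0) - nG * (m1 z)^2 / RR"
    by (simp add: sum_subtractf cardGG sum.swap[of _ GG])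
  also have "\<dots> \<le> (\<Sum>t\<in>W3. \<Sum>t'\<in>W3. ?f t * ?f t' * nG * ?cf t t') - nG * (m1 z)^2 / RR"
    using fnn by (intro diff_right_mono sum_mono C2) (auto intro: mult_nonneg_nonneg)
  also have "\<dots> = nG / RR * (\<Sum>t\<in>W3. \<Sum>t'\<in>W3. ?f t * ?f t' * (RR * ?cf t t' - 1))"
  proof -
    have s1: "(\<Sum>t\<in>W3. \<Sum>t'\<in>W3. ?f t * ?f t' * (RR * ?cf t t' - 1)) = RR * (\<Sum>t\<in>W3. \<Sum>t'\<in>W3. ?f t * ?f t' * ?cf t t') - (\<Sum>t\<in>W3. \<Sum>t'\<in>W3. ?f t * ?f t')"
      by (simp add: sum_subtractf sum_distrib_left right_diff_distrib mult_ac)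
    have s2: "(\<Sum>t\<in>W3. \<Sum>t'\<in>W3. ?f t * ?f t' * nG * ?cf t t') = nG * (\<Sum>t\<in>W3. \<Sum>t'\<in>W3. ?f t * ?f t' * ?cf t t')"
      by (simp add: sum_distrib_left mult_ac)
    show ?thesis unfolding s1 s2 msq by (simp add: field_simps)
  qed
  also have "\<dots> \<le> nG / RR * (\<Sum>t\<in>W3. \<Sum>t'\<in>W3. ?f t * ?f t' * ?K t t')"
    using fnn nG_pos C3 by (intro mult_left_mono sum_mono) (auto intro!: mult_left_mono mult_nonneg_nonneg)
  also have "\<dots> = nG / RR * (\<Sum>t\<in>W3. ?f t * (\<Sum>t'\<in>W3. ?f t' * ?K t t'))"
    by (simp add: sum_distrib_left mult_ac)
  also have "\<dots> \<le> nG / RR * (\<Sum>t\<in>W3. ?f t * (7 * eps * QZ z))"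
    using fnn nG_pos C4 by (intro mult_left_mono sum_mono) auto
  also have "\<dots> = nG / RR * (7 * eps * QZ z * m1 z)"
    by (simp add: m1_def sum_distrib_left sum_distrib_right mult_ac)
  finally show ?thesis .
qed

end

context lhl begin

definition "mu = sqrt 7 * 2 powr (-\<theta>/2)"

lemma mu_pos: "0 < mu" unfolding mu_def by simp
lemma mu_sq: "mu^2 = 7 * eps"
proof -
  have "mu^2 = (sqrt 7 * sqrt 7) * (2 powr (-\<theta>/2) * 2 powr (-\<theta>/2))"
    unfolding mu_def power2_eq_square by (simp only: mult_ac)
  also have "\<dots> = 7 * 2 powr (-\<theta>/2 + -\<theta>/2)" by (simp only: powr_add[symmetric]) simp
  also have "\<dots> = 7 * eps" unfolding eps_def by simp
  finally show ?thesis .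
qed

lemma per_z: "(\<Sum>g\<in>GG. \<Sum>y\<in>O3. \<bar>AA g y z - m1 z / RR\<bar>) \<le> nG * mu * (QZ z + m1 z) / 2"
proof (cases "QZ z = 0")
  case True
  then have m0: "m1 z = 0" using m1_nn[of z] m1_le[of z] by simp
  have A0: "\<And>g y. AA g y z = 0" using AA_nn AA_le m0 by (metis order_antisym)
  show ?thesis by (simp add: A0 m0 True)
next
  case False
  then have Qp: "0 < QZ z" using QZ_nn[of z] by simp
  define W where "W = mu * QZ z / RR"
  have Wp: "0 < W" unfolding W_def using mu_pos Qp by simp
  have "(\<Sum>g\<in>GG. \<Sum>y\<in>O3. \<bar>AA g y z - m1 z / RR\<bar>)
      \<le> (\<Sum>g\<in>GG. \<Sum>y\<in>O3. W/2 + (AA g y z - m1 z / RR)^2 / (2*W))"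
    by (intro sum_mono amgm Wp)
  also have "\<dots> = real (card GG) * real (card O3) * W / 2 + (\<Sum>g\<in>GG. \<Sum>y\<in>O3. (AA g y z - m1 z / RR)^2) / (2*W)"
    by (simp add: sum.distrib sum_divide_distrib)
  also have "\<dots> \<le> real (card GG) * real (card O3) * W / 2 + (nG / RR * (7 * eps * QZ z * m1 z)) / (2*W)"
    using coll[of z] Wp by (intro add_left_mono divide_right_mono) auto
  also have "\<dots> = nG * mu * (QZ z + m1 z) / 2"
  proof -
    have RRp: "0 < RR" by simp
    have t1: "nG * RR * W / 2 = nG * mu * QZ z / 2" unfolding W_def using RRp by simp
    have t2: "(nG / RR * (mu^2 * QZ z * m1 z)) / (2*W) = nG * mu * m1 z / 2"
      unfolding W_def using RRp mu_pos Qp by (simp add: power2_eq_square)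
    show ?thesis unfolding cardGG cardO3 mu_sq[symmetric] t1 t2 by (simp add: add_divide_distrib distrib_left)
  qed
  finally show ?thesis .
qed

lemma main_cs: "(\<Sum>z\<in>Zs. \<Sum>g\<in>GG. \<Sum>y\<in>O3. \<bar>AA g y z - m1 z / RR\<bar>) \<le> nG * mu"
proof -
  have "(\<Sum>z\<in>Zs. \<Sum>g\<in>GG. \<Sum>y\<in>O3. \<bar>AA g y z - m1 z / RR\<bar>) \<le> (\<Sum>z\<in>Zs. nG * mu * (QZ z + m1 z) / 2)"
    by (intro sum_mono per_z)
  also have "\<dots> = (nG * mu / 2) * (\<Sum>z\<in>Zs. QZ z + m1 z)"
    unfolding sum_distrib_left by (intro sum.cong refl) simp
  also have "\<dots> = nG * mu * ((\<Sum>z\<in>Zs. QZ z) + (\<Sum>z\<in>Zs. m1 z)) / 2"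
    by (simp only: sum.distrib) simp
  also have "\<dots> \<le> nG * mu * (1 + 1) / 2"
    using sum_QZ sum_m1 nG_pos mu_pos by (intro divide_right_mono mult_left_mono) auto
  finally show ?thesis by simp
qed

end

context lhl begin

definition "Hd e d f z = (\<Sum>gX\<in>FX. \<Sum>gU\<in>FU. \<Sum>gV\<in>FV. \<Sum>w\<in>Xs\<times>Us\<times>Vs\<times>Zs.
     if gX (fst w) = e \<and> gU (fst (snd w)) = d \<and> gV (fst (snd (snd w))) = f \<and> snd (snd (snd w)) = z then P w else 0)
   / (real (card FX) * real (card FU) * real (card FV))"

lemma inner_eq: assumes "z \<in> Zs"
  shows "(\<Sum>w\<in>Xs\<times>Us\<times>Vs\<times>Zs. if fst g (fst w) = fst y \<and> fst (snd g) (fst (snd w)) = fst (snd y)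
            \<and> snd (snd g) (fst (snd (snd w))) = snd (snd y) \<and> snd (snd (snd w)) = z then P w else 0)
     = AA g y z + BB g y z"
proof -
  have "(\<Sum>w\<in>Xs\<times>Us\<times>Vs\<times>Zs. if fst g (fst w) = fst y \<and> fst (snd g) (fst (snd w)) = fst (snd y)
            \<and> snd (snd g) (fst (snd (snd w))) = snd (snd y) \<and> snd (snd (snd w)) = z then P w else 0)
      = (\<Sum>t\<in>W3. \<Sum>z'\<in>Zs. if hv g t = y \<and> z' = z then P (mk4 t z') else 0)"
    unfolding sum_4_3[OF finX finU finV finZ] W3_def
    by (intro sum.cong refl) (auto simp: mk4_def hv_def prod_eq_iff)
  also have "\<dots> = (\<Sum>t\<in>W3. if hv g t = y then P (mk4 t z) else 0)"
    using assms finZ by (simp add: if_conj0 sum_if_out cong: if_cong)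
  also have "\<dots> = AA g y z + BB g y z"
    unfolding AA_def BB_def sum.distrib[symmetric] by (intro sum.cong refl) (simp add: P12[symmetric])
  finally show ?thesis .
qed

lemma Hd_eq: assumes "z \<in> Zs"
  shows "Hd e d f z = (\<Sum>g\<in>GG. AA g (e,d,f) z + BB g (e,d,f) z) / nG"
  unfolding Hd_def sumG[where A=FX and B=FU and C=FV] nG_def GG_def[symmetric]
  using inner_eq[OF assms, of _ "(e,d,f)"] by simp

lemma QZ_split: "QZ z = m1 z + m2 z"
  unfolding QZ_eq m1_def m2_def sum.distrib[symmetric] by (intro sum.cong refl) (rule P12)

lemma sum_m2: "(\<Sum>z\<in>Zs. m2 z) = (\<Sum>w\<in>Xs\<times>Us\<times>Vs\<times>Zs. P2 w)"
  unfolding m2_def sum_4_3[OF finX finU finV finZ] W3_def by (rule sum.swap)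

lemma tri: "\<bar>a + b - c\<bar> \<le> \<bar>a\<bar> + \<bar>b\<bar> + \<bar>c::real\<bar>" by arith

lemma arith1: "0 < (n::real) \<Longrightarrow> (A + B)/n - (m + m')/R = (A - n*(m/R))/n + B/n - m'/R"
  by (simp add: diff_divide_distrib add_divide_distrib)

lemma pointwise: assumes "z \<in> Zs"
  shows "\<bar>Hd e d f z - QZ z / RR\<bar> \<le> (\<Sum>g\<in>GG. \<bar>AA g (e,d,f) z - m1 z / RR\<bar>) / nG
     + (\<Sum>g\<in>GG. BB g (e,d,f) z) / nG + m2 z / RR"
proof -
  have np: "0 < nG" by (rule nG_pos)
  have a1: "(\<Sum>g\<in>GG. AA g (e,d,f) z + BB g (e,d,f) z) = (\<Sum>g\<in>GG. AA g (e,d,f) z) + (\<Sum>g\<in>GG. BB g (e,d,f) z)"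
    by (rule sum.distrib)
  have a2: "(\<Sum>g\<in>GG. AA g (e,d,f) z - m1 z / RR) = (\<Sum>g\<in>GG. AA g (e,d,f) z) - nG * (m1 z / RR)"
    by (simp add: sum_subtractf cardGG)
  have eq: "Hd e d f z - QZ z / RR = (\<Sum>g\<in>GG. AA g (e,d,f) z - m1 z / RR) / nG + (\<Sum>g\<in>GG. BB g (e,d,f) z) / nG - m2 z / RR"
    unfolding Hd_eq[OF assms] QZ_split a1 a2 by (rule arith1[OF np])
  have "\<bar>Hd e d f z - QZ z / RR\<bar> \<le> \<bar>(\<Sum>g\<in>GG. AA g (e,d,f) z - m1 z / RR) / nG\<bar> + \<bar>(\<Sum>g\<in>GG. BB g (e,d,f) z) / nG\<bar> + \<bar>m2 z / RR\<bar>"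
    unfolding eq by (rule tri)
  also have "\<dots> \<le> (\<Sum>g\<in>GG. \<bar>AA g (e,d,f) z - m1 z / RR\<bar>) / nG + (\<Sum>g\<in>GG. BB g (e,d,f) z) / nG + m2 z / RR"
  proof -
    have "\<bar>(\<Sum>g\<in>GG. AA g (e,d,f) z - m1 z / RR)\<bar> \<le> (\<Sum>g\<in>GG. \<bar>AA g (e,d,f) z - m1 z / RR\<bar>)"
      by (rule sum_abs)
    then have b1: "\<bar>(\<Sum>g\<in>GG. AA g (e,d,f) z - m1 z / RR)\<bar> / nG \<le> (\<Sum>g\<in>GG. \<bar>AA g (e,d,f) z - m1 z / RR\<bar>) / nG"
      using np by (intro divide_right_mono) auto
    have b1': "\<bar>(\<Sum>g\<in>GG. AA g (e,d,f) z - m1 z / RR) / nG\<bar> = \<bar>(\<Sum>g\<in>GG. AA g (e,d,f) z - m1 z / RR)\<bar> / nG"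
      using np by (simp only: abs_divide)
    have "0 \<le> (\<Sum>g\<in>GG. BB g (e,d,f) z)"
      unfolding BB_def using P2_nn by (intro sum_nonneg) auto
    then have b2: "\<bar>(\<Sum>g\<in>GG. BB g (e,d,f) z) / nG\<bar> = (\<Sum>g\<in>GG. BB g (e,d,f) z) / nG" using np by simp
    have "0 \<le> m2 z" unfolding m2_def by (intro sum_nonneg P2_nn)
    then have b3: "\<bar>m2 z / RR\<bar> = m2 z / RR" by simp
    show ?thesis using b1 b1' b2 b3 by linarith
  qed
  finally show ?thesis .
qed

lemma swap3: "(\<Sum>y\<in>A. \<Sum>z\<in>B. \<Sum>g\<in>C. F y z g) = (\<Sum>z\<in>B. \<Sum>g\<in>C. \<Sum>y\<in>A. F y z g)"
proof -
  have "(\<Sum>y\<in>A. \<Sum>z\<in>B. \<Sum>g\<in>C. F y z g) = (\<Sum>z\<in>B. \<Sum>y\<in>A. \<Sum>g\<in>C. F y z g)"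
    by (rule sum.swap)
  also have "\<dots> = (\<Sum>z\<in>B. \<Sum>g\<in>C. \<Sum>y\<in>A. F y z g)"
    by (intro sum.cong refl sum.swap)
  finally show ?thesis .
qed

lemma div2: "(\<Sum>y\<in>A. \<Sum>z\<in>B. (S y z) / (n::real)) = (\<Sum>y\<in>A. \<Sum>z\<in>B. S y z) / n"
  by (simp only: sum_divide_distrib)

theorem main_thm:
  "(\<Sum>(e,d,f,z)\<in>Ox\<times>Ou\<times>Ov\<times>Zs. \<bar>Hd e d f z - QZ z / RR\<bar>)
     \<le> 2 * (\<Sum>w\<in>Xs\<times>Us\<times>Vs\<times>Zs. P2 w) + mu"
proof -
  have finOx: "finite Ox" "finite Ou" "finite Ov"
    using cOx cOu cOv by (auto intro: card_ge_0_finite)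
  have np: "0 < nG" by (rule nG_pos)
  let ?S1 = "\<lambda>y z. (\<Sum>g\<in>GG. \<bar>AA g y z - m1 z / RR\<bar>)"
  let ?S2 = "\<lambda>y z. (\<Sum>g\<in>GG. BB g y z)"
  have s1: "(\<Sum>y\<in>O3. \<Sum>z\<in>Zs. ?S1 y z / nG) \<le> mu"
  proof -
    have "(\<Sum>y\<in>O3. \<Sum>z\<in>Zs. ?S1 y z / nG) = (\<Sum>y\<in>O3. \<Sum>z\<in>Zs. ?S1 y z) / nG" by (rule div2)
    also have "(\<Sum>y\<in>O3. \<Sum>z\<in>Zs. ?S1 y z) = (\<Sum>z\<in>Zs. \<Sum>g\<in>GG. \<Sum>y\<in>O3. \<bar>AA g y z - m1 z / RR\<bar>)"
      by (rule swap3)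
    also have "\<dots> / nG \<le> mu" using main_cs np by (simp only: pos_divide_le_eq mult.commute)
    finally show ?thesis .
  qed
  have s2: "(\<Sum>y\<in>O3. \<Sum>z\<in>Zs. ?S2 y z / nG) = (\<Sum>z\<in>Zs. m2 z)"
  proof -
    have "(\<Sum>y\<in>O3. \<Sum>z\<in>Zs. ?S2 y z / nG) = (\<Sum>y\<in>O3. \<Sum>z\<in>Zs. ?S2 y z) / nG" by (rule div2)
    also have "(\<Sum>y\<in>O3. \<Sum>z\<in>Zs. ?S2 y z) = (\<Sum>z\<in>Zs. \<Sum>g\<in>GG. \<Sum>y\<in>O3. BB g y z)"
      by (rule swap3)
    also have "\<dots> = (\<Sum>z\<in>Zs. \<Sum>g\<in>GG. m2 z)" by (intro sum.cong refl sumB)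
    also have "\<dots> = nG * (\<Sum>z\<in>Zs. m2 z)" by (simp add: cardGG sum_distrib_left)
    finally show ?thesis using np by simp
  qed
  have s3: "(\<Sum>y\<in>O3. \<Sum>z\<in>Zs. m2 z / RR) = (\<Sum>z\<in>Zs. m2 z)"
  proof -
    have "(\<Sum>y\<in>O3. \<Sum>z\<in>Zs. m2 z / RR) = (\<Sum>y\<in>O3. \<Sum>z\<in>Zs. m2 z) / RR" by (rule div2)
    also have "\<dots> = RR * (\<Sum>z\<in>Zs. m2 z) / RR" by (simp only: sum_constant cardO3)
    finally show ?thesis by simp
  qed
  have "(\<Sum>(e,d,f,z)\<in>Ox\<times>Ou\<times>Ov\<times>Zs. \<bar>Hd e d f z - QZ z / RR\<bar>)
      = (\<Sum>y\<in>O3. \<Sum>z\<in>Zs. \<bar>Hd (fst y) (fst (snd y)) (snd (snd y)) z - QZ z / RR\<bar>)"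
    unfolding sum_4_3[OF finOx finZ] O3_def by (simp add: mk4_def case_prod_unfold)
  also have "\<dots> \<le> (\<Sum>y\<in>O3. \<Sum>z\<in>Zs. ?S1 y z / nG + ?S2 y z / nG + m2 z / RR)"
    using pointwise by (intro sum_mono) auto
  also have "\<dots> = (\<Sum>y\<in>O3. \<Sum>z\<in>Zs. ?S1 y z / nG) + (\<Sum>y\<in>O3. \<Sum>z\<in>Zs. ?S2 y z / nG) + (\<Sum>y\<in>O3. \<Sum>z\<in>Zs. m2 z / RR)"
    by (simp only: sum.distrib)
  also have "\<dots> \<le> mu + (\<Sum>z\<in>Zs. m2 z) + (\<Sum>z\<in>Zs. m2 z)"
    unfolding s2 s3 using s1 by simp
  finally show ?thesis unfolding sum_m2 by simp
qed

end

lemma map_pair_eq: "map (\<lambda>w. (f w, g w)) t = map (\<lambda>w. (f w, g w)) s \<longleftrightarrow> map f t = map f s \<and> map g t = map g s"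
proof (induction t arbitrary: s)
  case Nil then show ?case by auto
next
  case (Cons a t) then show ?case by (cases s) auto
qed

context condc begin

lemma Pfg_cc: "Pfg (f w, g w) = cc w * Pg (g w)"
proof (cases "Pg (g w) = 0")
  case True
  then have "Pfg (f w, g w) = 0" using Pfg_le[of "f w" "g w"] Pfg_nn[of "(f w, g w)"] by simp
  then show ?thesis using True by simp
next
  case False then show ?thesis by (simp add: cc_def)
qed

lemma prod_Pfg: "prod_list (map (\<lambda>w. Pfg (f w, g w)) s) = prod_list (map cc s) * prod_list (map (\<lambda>w. Pg (g w)) s)"
  by (induction s) (simp_all add: Pfg_cc mult_ac)

lemma tail_generic:
  assumes N1: "1 \<le> N"
    and H: "\<And>s. length s = N \<Longrightarrow> \<not> T s \<Longrightarrow>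
        prod_list (map (\<lambda>w. Pfg (f w, g w)) s) > 2 powr (-(real N * (cond_entropy q f g - delta_A N))) * prod_list (map (\<lambda>w. Pg (g w)) s)"
  shows "(\<Sum>s\<in>{s. length s = N}. if T s then 0 else iid q s) \<le> exp (-3) / real N"
proof -
  let ?a = "2 powr (-(real N * (cond_entropy q f g - delta_A N)))"
  have "(\<Sum>s\<in>{s. length s = N}. if T s then 0 else iid q s) = (\<Sum>s\<in>{s\<in>{s. length s = N}. \<not> T s}. iid q s)"
  proof -
    have "(\<Sum>s\<in>{s. length s = N}. if T s then 0 else iid q s) = (\<Sum>s\<in>{s. length s = N}. if \<not> T s then iid q s else 0)"
      by (intro sum.cong) auto
    also have "\<dots> = (\<Sum>s\<in>{s\<in>{s. length s = N}. \<not> T s}. iid q s)"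
      by (rule sum.inter_filter[symmetric, OF finite_len])
    finally show ?thesis .
  qed
  also have "\<dots> \<le> (\<Sum>s\<in>{s. length s = N \<and> prod_list (map cc s) > ?a}. iid q s)"
  proof (rule sum_mono2)
    show "finite {s. length s = N \<and> prod_list (map cc s) > ?a}"
      by (rule finite_subset[OF _ finite_len[of N]]) auto
    show "{s\<in>{s. length s = N}. \<not> T s} \<subseteq> {s. length s = N \<and> prod_list (map cc s) > ?a}"
    proof
      fix s assume "s \<in> {s\<in>{s. length s = N}. \<not> T s}"
      then have l: "length s = N" and nt: "\<not> T s" by auto
      have h: "prod_list (map cc s) * prod_list (map (\<lambda>w. Pg (g w)) s) > ?a * prod_list (map (\<lambda>w. Pg (g w)) s)"
        using H[OF l nt] unfolding prod_Pfg .
      have "0 \<le> prod_list (map (\<lambda>w. Pg (g w)) s)" by (intro prod_list_nonneg) (auto simp: Pg_nn)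
      then have "prod_list (map cc s) > ?a" using h
        by (metis mult_right_mono not_le)
      then show "s \<in> {s. length s = N \<and> prod_list (map cc s) > ?a}" using l by simp
    qed
  qed (simp add: iid_nn)
  also have "\<dots> \<le> exp (-3) / real N" by (rule conc[OF N1])
  finally show ?thesis .
qed

end

locale glue =
  fixes q :: "bool \<times> bool \<times> bool \<times> 'z::finite \<Rightarrow> real" and N :: nat
  assumes pmf: "is_pmf q"
begin

definition "LL = {s :: (bool \<times> bool \<times> bool \<times> 'z) list. length s = N}"
definition "BN = {xs :: bool list. length xs = N}"
definition "ZN = {zs :: 'z list. length zs = N}"
definition "Om = BN \<times> BN \<times> BN \<times> ZN"
definition "split4 s = (map compX s, map compU s, map compV s, map compZ s)"
definition "zip4 w = zip (fst w) (zip (fst (snd w)) (zip (fst (snd (snd w))) (snd (snd (snd w)))))"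
definition "PP w = iid q (zip4 w)"

lemma q_nn: "0 \<le> q w" using pmf unfolding is_pmf_def by blast

lemma finBN: "finite BN" unfolding BN_def by (rule finite_len)
lemma finZN: "finite ZN" unfolding ZN_def by (rule finite_len)
lemma finLL: "finite LL" unfolding LL_def by (rule finite_len)

lemma zip4_split4: "zip4 (split4 s) = s"
  unfolding zip4_def split4_def by (induction s) (auto simp: compX_def compU_def compV_def compZ_def)

lemma split4_zip4_aux: "length x = length u \<Longrightarrow> length u = length v \<Longrightarrow> length v = length z \<Longrightarrow>
   split4 (zip4 (x,u,v,z)) = (x,u,v,z)"
proof (induction x arbitrary: u v z)
  case Nil then show ?case by (simp add: split4_def zip4_def)
next
  case (Cons a x)
  then obtain b u' c v' d z' where "u = b#u'" "v = c#v'" "z = d#z'"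
    by (metis length_Suc_conv)
  then show ?case using Cons by (auto simp: split4_def zip4_def compX_def compU_def compV_def compZ_def)
qed

lemma split4_zip4: "w \<in> Om \<Longrightarrow> split4 (zip4 w) = w"
  using split4_zip4_aux[of "fst w" "fst (snd w)" "fst (snd (snd w))" "snd (snd (snd w))"]
  by (auto simp: Om_def BN_def ZN_def)

lemma bij: "bij_betw zip4 Om LL"
proof (rule bij_betw_byWitness[where f'=split4])
  show "\<forall>a\<in>Om. split4 (zip4 a) = a" using split4_zip4 by blast
  show "\<forall>a'\<in>LL. zip4 (split4 a') = a'" using zip4_split4 by blast
  show "zip4 ` Om \<subseteq> LL" by (auto simp: Om_def BN_def ZN_def LL_def zip4_def)
  show "split4 ` LL \<subseteq> Om" by (auto simp: Om_def BN_def ZN_def LL_def split4_def)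
qed

lemma sum_LL: "(\<Sum>t\<in>LL. F t) = (\<Sum>w\<in>Om. F (zip4 w))"
  using sum.reindex_bij_betw[OF bij, of F] by simp

lemma sum_Om: "(\<Sum>w\<in>Om. if R w then PP w else 0) = (\<Sum>t\<in>LL. if R (split4 t) then iid q t else 0)"
  unfolding sum_LL PP_def by (intro sum.cong refl) (simp add: split4_zip4)

lemma PP_nn: "0 \<le> PP w" unfolding PP_def iid_def by (intro prod_list_nonneg) (auto simp: q_nn)

lemma Psum: "(\<Sum>w\<in>Om. PP w) = 1"
proof -
  have "(\<Sum>w\<in>Om. PP w) = (\<Sum>t\<in>LL. iid q t)" unfolding sum_LL PP_def ..
  also have "\<dots> = (\<Sum>w\<in>UNIV. q w)^N" unfolding LL_def iid_def by (rule sum_lists_prod)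
  finally show ?thesis using pmf by (simp add: is_pmf_def)
qed

lemma marg: assumes "s \<in> LL"
  shows "(\<Sum>t\<in>LL. if map h t = map h s then iid q t else 0) = prod_list (map (\<lambda>w. prob_of q h (h w)) s)"
proof -
  have "(\<Sum>t\<in>LL. if map h t = map h s then iid q t else 0) = (\<Sum>t\<in>{t\<in>LL. map h t = map h s}. iid q t)"
    by (rule sum.inter_filter[symmetric, OF finLL])
  also have "\<dots> = (\<Sum>t\<in>{t. length t = N \<and> map h t = map h s}. iid q t)" by (simp add: LL_def)
  also have "\<dots> = iid (prob_of q h) (map h s)" using assms by (simp add: marginal LL_def)
  finally show ?thesis by (simp add: iid_def comp_def)
qed

end

context glue begin

lemma N1: "x \<in> BN \<Longrightarrow> u \<in> BN \<Longrightarrow> z \<in> ZN \<Longrightarrow>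
  (\<Sum>v\<in>BN. PP (x,u,v,z)) = (\<Sum>w\<in>Om. if x = fst w \<and> u = fst (snd w) \<and> z = snd (snd (snd w)) then PP w else 0)"
  unfolding Om_def sum_4_3[OF finBN finBN finBN finZN] unfolding sum3 using finBN finZN
  by (simp add: mk4_def if_conj0 sum_if_out cong: if_cong)

lemma N2: "u \<in> BN \<Longrightarrow> z \<in> ZN \<Longrightarrow>
  (\<Sum>x\<in>BN. \<Sum>v\<in>BN. PP (x,u,v,z)) = (\<Sum>w\<in>Om. if u = fst (snd w) \<and> z = snd (snd (snd w)) then PP w else 0)"
  unfolding Om_def sum_4_3[OF finBN finBN finBN finZN] unfolding sum3 using finBN finZN
  by (simp add: mk4_def if_conj0 sum_if_out cong: if_cong)

lemma N3: "z \<in> ZN \<Longrightarrow>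
  (\<Sum>u\<in>BN. \<Sum>x\<in>BN. \<Sum>v\<in>BN. PP (x,u,v,z)) = (\<Sum>w\<in>Om. if z = snd (snd (snd w)) then PP w else 0)"
proof -
  assume z: "z \<in> ZN"
  have "(\<Sum>u\<in>BN. \<Sum>x\<in>BN. \<Sum>v\<in>BN. PP (x,u,v,z)) = (\<Sum>x\<in>BN. \<Sum>u\<in>BN. \<Sum>v\<in>BN. PP (x,u,v,z))"
    by (rule sum.swap)
  also have "\<dots> = (\<Sum>w\<in>Om. if z = snd (snd (snd w)) then PP w else 0)"
    unfolding Om_def sum_4_3[OF finBN finBN finBN finZN] unfolding sum3 using finBN finZN z
    by (simp add: mk4_def sum_if_out cong: if_cong)
  finally show ?thesis .
qed

lemma M1: assumes "s \<in> LL"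
  shows "(\<Sum>v\<in>BN. PP (map compX s, map compU s, v, map compZ s))
     = prod_list (map (\<lambda>w. prob_of q (\<lambda>w. (compX w, compU w, compZ w)) (compX w, compU w, compZ w)) s)"
proof -
  have m: "map compX s \<in> BN" "map compU s \<in> BN" "map compZ s \<in> ZN" using assms by (auto simp: LL_def BN_def ZN_def)
  have "(\<Sum>v\<in>BN. PP (map compX s, map compU s, v, map compZ s))
      = (\<Sum>t\<in>LL. if map (\<lambda>w. (compX w, compU w, compZ w)) t = map (\<lambda>w. (compX w, compU w, compZ w)) s then iid q t else 0)"
    unfolding N1[OF m] sum_Om by (intro sum.cong refl) (auto simp: split4_def map_pair_eq)
  also have "\<dots> = prod_list (map (\<lambda>w. prob_of q (\<lambda>w. (compX w, compU w, compZ w)) (compX w, compU w, compZ w)) s)"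
    by (rule marg[OF assms])
  finally show ?thesis .
qed

lemma M2: assumes "s \<in> LL"
  shows "(\<Sum>x\<in>BN. \<Sum>v\<in>BN. PP (x, map compU s, v, map compZ s))
     = prod_list (map (\<lambda>w. prob_of q (\<lambda>w. (compU w, compZ w)) (compU w, compZ w)) s)"
proof -
  have m: "map compU s \<in> BN" "map compZ s \<in> ZN" using assms by (auto simp: LL_def BN_def ZN_def)
  have "(\<Sum>x\<in>BN. \<Sum>v\<in>BN. PP (x, map compU s, v, map compZ s))
      = (\<Sum>t\<in>LL. if map (\<lambda>w. (compU w, compZ w)) t = map (\<lambda>w. (compU w, compZ w)) s then iid q t else 0)"
    unfolding N2[OF m] sum_Om by (intro sum.cong refl) (auto simp: split4_def map_pair_eq)
  also have "\<dots> = prod_list (map (\<lambda>w. prob_of q (\<lambda>w. (compU w, compZ w)) (compU w, compZ w)) s)"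
    by (rule marg[OF assms])
  finally show ?thesis .
qed

lemma M3: assumes "zs \<in> ZN"
  shows "(\<Sum>u\<in>BN. \<Sum>x\<in>BN. \<Sum>v\<in>BN. PP (x,u,v,zs)) = iid (prob_of q compZ) zs"
proof -
  have "(\<Sum>u\<in>BN. \<Sum>x\<in>BN. \<Sum>v\<in>BN. PP (x,u,v,zs)) = (\<Sum>t\<in>LL. if map compZ t = zs then iid q t else 0)"
    unfolding N3[OF assms] sum_Om by (intro sum.cong refl) (auto simp: split4_def)
  also have "\<dots> = (\<Sum>t\<in>{t\<in>LL. map compZ t = zs}. iid q t)"
    by (rule sum.inter_filter[symmetric, OF finLL])
  also have "\<dots> = (\<Sum>t\<in>{t. length t = N \<and> map compZ t = zs}. iid q t)" by (simp add: LL_def)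
  also have "\<dots> = iid (prob_of q compZ) zs" using assms by (simp add: marginal ZN_def)
  finally show ?thesis .
qed

lemma M3s: assumes "s \<in> LL"
  shows "(\<Sum>u\<in>BN. \<Sum>x\<in>BN. \<Sum>v\<in>BN. PP (x,u,v,map compZ s)) = prod_list (map (\<lambda>w. prob_of q compZ (compZ w)) s)"
  using M3[of "map compZ s"] assms by (simp add: ZN_def LL_def iid_def comp_def)

lemma M1': assumes "s \<in> LL"
  shows "(\<Sum>v\<in>BN. PP (map compX s, map compU s, v, map compZ s))
     = prod_list (map (\<lambda>w. prob_of q (\<lambda>w. (compU w, compZ w, compX w)) (compU w, compZ w, compX w)) s)"
proof -
  have m: "map compX s \<in> BN" "map compU s \<in> BN" "map compZ s \<in> ZN" using assms by (auto simp: LL_def BN_def ZN_def)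
  have "(\<Sum>v\<in>BN. PP (map compX s, map compU s, v, map compZ s))
      = (\<Sum>t\<in>LL. if map (\<lambda>w. (compU w, compZ w, compX w)) t = map (\<lambda>w. (compU w, compZ w, compX w)) s then iid q t else 0)"
    unfolding N1[OF m] sum_Om by (intro sum.cong refl) (auto simp: split4_def map_pair_eq)
  also have "\<dots> = prod_list (map (\<lambda>w. prob_of q (\<lambda>w. (compU w, compZ w, compX w)) (compU w, compZ w, compX w)) s)"
    by (rule marg[OF assms])
  finally show ?thesis .
qed

lemma prob_inj: "prob_of q (\<lambda>w. (compV w, compU w, compZ w, compX w)) (compV w, compU w, compZ w, compX w) = q w"
proof -
  have "{w'. (compV w', compU w', compZ w', compX w') = (compV w, compU w, compZ w, compX w)} = {w}"
    by (auto simp: compX_def compU_def compV_def compZ_def prod_eq_iff)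
  then show ?thesis by (simp add: prob_of_def)
qed

lemma M4: "PP (split4 s) = prod_list (map (\<lambda>w. prob_of q (\<lambda>w. (compV w, compU w, compZ w, compX w)) (compV w, compU w, compZ w, compX w)) s)"
  unfolding PP_def zip4_split4 prob_inj iid_def ..

end

lemma card_bitstrings: "card (bitstrings r) = 2^r"
proof -
  have "bitstrings r = {xs. set xs \<subseteq> (UNIV::bool set) \<and> length xs = r}" by (simp add: bitstrings_def)
  then show ?thesis using card_lists_length_eq[of "UNIV::bool set" r] by simp
qed

lemma fin_bitstrings: "finite (bitstrings r)" unfolding bitstrings_def by (rule finite_len)

lemma tu_facts: assumes "two_universal N r F"
  shows "finite F" "F \<noteq> {}" "\<And>g x. g \<in> F \<Longrightarrow> x \<in> bitstrings N \<Longrightarrow> g x \<in> bitstrings r"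
    "\<And>x x'. x \<in> bitstrings N \<Longrightarrow> x' \<in> bitstrings N \<Longrightarrow> x \<noteq> x' \<Longrightarrow> real (card {g\<in>F. g x = g x'}) \<le> real (card F) / 2^r"
proof -
  have sub: "F \<subseteq> bitstrings N \<rightarrow>\<^sub>E bitstrings r" using assms by (simp add: two_universal_def)
  show "finite F" by (rule finite_subset[OF sub finite_PiE[OF fin_bitstrings fin_bitstrings]])
  show "F \<noteq> {}" using assms by (simp add: two_universal_def)
  show "\<And>g x. g \<in> F \<Longrightarrow> x \<in> bitstrings N \<Longrightarrow> g x \<in> bitstrings r" using sub by (auto simp: PiE_def Pi_def)
  show "\<And>x x'. x \<in> bitstrings N \<Longrightarrow> x' \<in> bitstrings N \<Longrightarrow> x \<noteq> x' \<Longrightarrow> real (card {g\<in>F. g x = g x'}) \<le> real (card F) / 2^r"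
    using assms by (simp add: two_universal_def)
qed

theorem lemma2:
  fixes q :: "bool \<times> bool \<times> bool \<times> 'z::finite \<Rightarrow> real"
    and N rX rU rV :: nat and \<xi> :: real
    and FX FU FV :: "(bool list \<Rightarrow> bool list) set"
  assumes "is_pmf q"
    and "N \<ge> 1"
    and "\<xi> > 0"
    and "real rX = real N * (cond_entropy q compX (\<lambda>w. (compU w, compZ w))
                             - 2 * (delta_A N + \<xi>) / 2)"
    and "real rU = real N * (cond_entropy q compU compZ - 2 * (delta_A N + \<xi>) / 2)"
    and "real rV = real N * (cond_entropy q compV (\<lambda>w. (compU w, compZ w, compX w))
                             - 2 * (delta_A N + \<xi>) / 2)"
    and "two_universal N rX FX"
    and "two_universal N rU FU"
    and "two_universal N rV FV"
  shows "var_dist (hashed_dist N q FX FU FV) (ideal_dist N q rX rU rV)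
           (bitstrings rX \<times> bitstrings rU \<times> bitstrings rV \<times> {zs. length zs = N})
         \<le> 2 / real N + sqrt 7 * 2 powr (- real N * \<xi> / 2)"
proof -
  note tX = tu_facts[OF assms(7)] and tU = tu_facts[OF assms(8)] and tV = tu_facts[OF assms(9)]
  interpret G: glue q N using assms(1) by unfold_locales
  have BN: "G.BN = bitstrings N" by (simp add: G.BN_def bitstrings_def)
  have th0: "0 \<le> real N * \<xi>" using assms(3) by simp
  interpret L: lhl G.BN G.BN G.BN G.ZN "bitstrings rX" "bitstrings rU" "bitstrings rV" FX FU FV rX rU rV "real N * \<xi>" G.PP
  proof (unfold_locales)
    show "finite G.BN" by (rule G.finBN)
    show "finite G.ZN" by (rule G.finZN)
    show "\<And>w. 0 \<le> G.PP w" by (rule G.PP_nn)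
    show "(\<Sum>w\<in>G.BN \<times> G.BN \<times> G.BN \<times> G.ZN. G.PP w) = 1" using G.Psum by (simp add: G.Om_def)
  qed (use tX tU tV th0 card_bitstrings BN in auto)
  have comps: "\<And>w. w \<in> G.Om \<Longrightarrow> map compX (G.zip4 w) = fst w \<and> map compU (G.zip4 w) = fst (snd w)
      \<and> map compV (G.zip4 w) = fst (snd (snd w)) \<and> map compZ (G.zip4 w) = snd (snd (snd w))"
    using G.split4_zip4 unfolding G.split4_def by (auto simp: prod_eq_iff)
  have inner: "\<And>gX gU gV e d f zs. (\<Sum>s\<in>{s. length s = N}. if gX (map compX s) = e \<and> gU (map compU s) = d \<and> gV (map compV s) = f \<and> map compZ s = zs then iid q s else 0)
     = (\<Sum>w\<in>G.BN \<times> G.BN \<times> G.BN \<times> G.ZN. if gX (fst w) = e \<and> gU (fst (snd w)) = d \<and> gV (fst (snd (snd w))) = f \<and> snd (snd (snd w)) = zs then G.PP w else 0)"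
    unfolding G.LL_def[symmetric] G.sum_LL G.Om_def[symmetric]
    by (intro sum.cong refl) (simp add: comps G.PP_def)
  have hd: "\<And>e d f zs. hashed_dist N q FX FU FV (e,d,f,zs) = L.Hd e d f zs"
    unfolding hashed_dist_def L.Hd_def by (simp only: case_prod_conv inner)
  have idl: "\<And>e d f (zs::'z list). (e,d,f,zs) \<in> bitstrings rX \<times> bitstrings rU \<times> bitstrings rV \<times> {zs. length zs = N} \<Longrightarrow>
      ideal_dist N q rX rU rV (e,d,f,zs) = L.QZ zs / 2^(rX+rU+rV)"
  proof -
    fix e d f and zs :: "'z list" assume m: "(e,d,f,zs) \<in> bitstrings rX \<times> bitstrings rU \<times> bitstrings rV \<times> {zs. length zs = N}"
    then have z: "zs \<in> G.ZN" by (simp add: G.ZN_def)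
    have "L.QZ zs = iid (prob_of q compZ) zs"
      unfolding L.QZ_def L.QUZ_def L.QXUZ_def by (rule G.M3[OF z])
    then show "ideal_dist N q rX rU rV (e,d,f,zs) = L.QZ zs / 2^(rX+rU+rV)"
      using m by (simp add: ideal_dist_def)
  qed
  have pt: "\<And>x. x \<in> bitstrings rX \<times> bitstrings rU \<times> bitstrings rV \<times> G.ZN \<Longrightarrow>
     \<bar>hashed_dist N q FX FU FV x - ideal_dist N q rX rU rV x\<bar> = (\<lambda>(e,d,f,z). \<bar>L.Hd e d f z - L.QZ z / 2^(rX+rU+rV)\<bar>) x"
  proof -
    fix x assume xm: "x \<in> bitstrings rX \<times> bitstrings rU \<times> bitstrings rV \<times> G.ZN"
    obtain e d f zs where x: "x = (e,d,f,zs)" by (cases x) auto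
    have i: "ideal_dist N q rX rU rV (e,d,f,zs) = L.QZ zs / 2^(rX+rU+rV)" by (rule idl) (use xm x in \<open>simp add: G.ZN_def\<close>)
    show "\<bar>hashed_dist N q FX FU FV x - ideal_dist N q rX rU rV x\<bar> = (\<lambda>(e,d,f,z). \<bar>L.Hd e d f z - L.QZ z / 2^(rX+rU+rV)\<bar>) x"
      unfolding x case_prod_conv hd i ..
  qed
  have lhs: "var_dist (hashed_dist N q FX FU FV) (ideal_dist N q rX rU rV)
           (bitstrings rX \<times> bitstrings rU \<times> bitstrings rV \<times> {zs. length zs = N})
       = (\<Sum>(e,d,f,z)\<in>bitstrings rX \<times> bitstrings rU \<times> bitstrings rV \<times> G.ZN. \<bar>L.Hd e d f z - L.QZ z / 2^(rX+rU+rV)\<bar>)"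
    unfolding var_dist_def by (rule sum.cong[OF _ pt]) (simp_all add: G.ZN_def)
  have N1: "1 \<le> N" using assms(2) by simp
  have sOm: "\<And>R. (\<Sum>w\<in>G.Om. if R w then 0 else G.PP w) = (\<Sum>t\<in>{t. length t = N}. if R (G.split4 t) then 0 else iid q t)"
    unfolding G.LL_def[symmetric] G.sum_LL G.PP_def by (intro sum.cong refl) (simp add: G.split4_zip4)
  have LLm: "\<And>t. length t = N \<Longrightarrow> t \<in> G.LL" by (simp add: G.LL_def)
  interpret CX: condc q compX "\<lambda>w. (compU w, compZ w)" by unfold_locales (rule assms(1))
  interpret CU: condc q compU compZ by unfold_locales (rule assms(1))
  interpret CV: condc q compV "\<lambda>w. (compU w, compZ w, compX w)" by unfold_locales (rule assms(1))
  have bX: "(\<Sum>w\<in>G.Om. if L.TX (fst w) (fst (snd w)) (snd (snd (snd w))) then 0 else G.PP w) \<le> exp (-3) / real N"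
    unfolding sOm G.split4_def fst_conv snd_conv
  proof (rule CX.tail_generic[OF N1])
    fix t :: "(bool \<times> bool \<times> bool \<times> 'z) list" assume l: "length t = N"
      and nt: "\<not> L.TX (map compX t) (map compU t) (map compZ t)"
    have e1: "L.QXUZ (map compX t) (map compU t) (map compZ t) = prod_list (map (\<lambda>w. CX.Pfg (compX w, compU w, compZ w)) t)"
      unfolding L.QXUZ_def G.M1[OF LLm[OF l]] CX.Pfg_def ..
    have e2: "L.QUZ (map compU t) (map compZ t) = prod_list (map (\<lambda>w. CX.Pg (compU w, compZ w)) t)"
      unfolding L.QUZ_def L.QXUZ_def G.M2[OF LLm[OF l]] CX.Pg_def ..
    have a: "L.aX = 2 powr (-(real N * (cond_entropy q compX (\<lambda>w. (compU w, compZ w)) - delta_A N)))"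
    proof -
      have r: "real rX = real N * cond_entropy q compX (\<lambda>w. (compU w, compZ w)) - real N * delta_A N - real N * \<xi>"
      proof -
        have h: "2 * (delta_A N + \<xi>) / 2 = delta_A N + \<xi>" by simp
        show ?thesis using assms(4) unfolding h by (simp add: algebra_simps)
      qed
      have "-(real rX + real N * \<xi>) = -(real N * (cond_entropy q compX (\<lambda>w. (compU w, compZ w)) - delta_A N))"
        unfolding r by (simp add: right_diff_distrib)
      then show ?thesis unfolding L.aX_def by simp
    qed
    show "prod_list (map (\<lambda>w. CX.Pfg (compX w, compU w, compZ w)) t) >
        2 powr (-(real N * (cond_entropy q compX (\<lambda>w. (compU w, compZ w)) - delta_A N))) * prod_list (map (\<lambda>w. CX.Pg (compU w, compZ w)) t)"
      using nt unfolding L.TX_def e1 e2 a by simp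
  qed
  have bU: "(\<Sum>w\<in>G.Om. if L.TU (fst (snd w)) (snd (snd (snd w))) then 0 else G.PP w) \<le> exp (-3) / real N"
    unfolding sOm G.split4_def fst_conv snd_conv
  proof (rule CU.tail_generic[OF N1])
    fix t :: "(bool \<times> bool \<times> bool \<times> 'z) list" assume l: "length t = N"
      and nt: "\<not> L.TU (map compU t) (map compZ t)"
    have e1: "L.QUZ (map compU t) (map compZ t) = prod_list (map (\<lambda>w. CU.Pfg (compU w, compZ w)) t)"
      unfolding L.QUZ_def L.QXUZ_def G.M2[OF LLm[OF l]] CU.Pfg_def ..
    have e2: "L.QZ (map compZ t) = prod_list (map (\<lambda>w. CU.Pg (compZ w)) t)"
      unfolding L.QZ_def L.QUZ_def L.QXUZ_def G.M3s[OF LLm[OF l]] CU.Pg_def ..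
    have a: "L.aU = 2 powr (-(real N * (cond_entropy q compU compZ - delta_A N)))"
    proof -
      have r: "real rU = real N * cond_entropy q compU compZ - real N * delta_A N - real N * \<xi>"
      proof -
        have h: "2 * (delta_A N + \<xi>) / 2 = delta_A N + \<xi>" by simp
        show ?thesis using assms(5) unfolding h by (simp add: algebra_simps)
      qed
      have "-(real rU + real N * \<xi>) = -(real N * (cond_entropy q compU compZ - delta_A N))"
        unfolding r by (simp add: right_diff_distrib)
      then show ?thesis unfolding L.aU_def by simp
    qed
    show "prod_list (map (\<lambda>w. CU.Pfg (compU w, compZ w)) t) >
        2 powr (-(real N * (cond_entropy q compU compZ - delta_A N))) * prod_list (map (\<lambda>w. CU.Pg (compZ w)) t)"
      using nt unfolding L.TU_def e1 e2 a by simp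
  qed
  have bV: "(\<Sum>w\<in>G.Om. if L.TV (fst w) (fst (snd w)) (fst (snd (snd w))) (snd (snd (snd w))) then 0 else G.PP w) \<le> exp (-3) / real N"
    unfolding sOm G.split4_def fst_conv snd_conv
  proof (rule CV.tail_generic[OF N1])
    fix t :: "(bool \<times> bool \<times> bool \<times> 'z) list" assume l: "length t = N"
      and nt: "\<not> L.TV (map compX t) (map compU t) (map compV t) (map compZ t)"
    have e1: "G.PP (map compX t, map compU t, map compV t, map compZ t) = prod_list (map (\<lambda>w. CV.Pfg (compV w, compU w, compZ w, compX w)) t)"
      using G.M4[of t] unfolding G.split4_def CV.Pfg_def .
    have e2: "L.QXUZ (map compX t) (map compU t) (map compZ t) = prod_list (map (\<lambda>w. CV.Pg (compU w, compZ w, compX w)) t)"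
      unfolding L.QXUZ_def G.M1'[OF LLm[OF l]] CV.Pg_def ..
    have a: "L.aV = 2 powr (-(real N * (cond_entropy q compV (\<lambda>w. (compU w, compZ w, compX w)) - delta_A N)))"
    proof -
      have r: "real rV = real N * cond_entropy q compV (\<lambda>w. (compU w, compZ w, compX w)) - real N * delta_A N - real N * \<xi>"
      proof -
        have h: "2 * (delta_A N + \<xi>) / 2 = delta_A N + \<xi>" by simp
        show ?thesis using assms(6) unfolding h by (simp add: algebra_simps)
      qed
      have "-(real rV + real N * \<xi>) = -(real N * (cond_entropy q compV (\<lambda>w. (compU w, compZ w, compX w)) - delta_A N))"
        unfolding r by (simp add: right_diff_distrib)
      then show ?thesis unfolding L.aV_def by simp
    qed
    show "prod_list (map (\<lambda>w. CV.Pfg (compV w, compU w, compZ w, compX w)) t) >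
        2 powr (-(real N * (cond_entropy q compV (\<lambda>w. (compU w, compZ w, compX w)) - delta_A N))) * prod_list (map (\<lambda>w. CV.Pg (compU w, compZ w, compX w)) t)"
      using nt unfolding L.TV_def e1 e2 a by simp
  qed
  have P2le: "\<And>w. L.P2 w \<le> (if L.TX (fst w) (fst (snd w)) (snd (snd (snd w))) then 0 else G.PP w)
      + (if L.TU (fst (snd w)) (snd (snd (snd w))) then 0 else G.PP w)
      + (if L.TV (fst w) (fst (snd w)) (fst (snd (snd w))) (snd (snd (snd w))) then 0 else G.PP w)"
  proof -
    fix w :: "bool list \<times> bool list \<times> bool list \<times> 'z list"
    obtain x u v z where w: "w = (x,u,v,z)" by (cases w) auto
    show "L.P2 w \<le> (if L.TX (fst w) (fst (snd w)) (snd (snd (snd w))) then 0 else G.PP w)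
      + (if L.TU (fst (snd w)) (snd (snd (snd w))) then 0 else G.PP w)
      + (if L.TV (fst w) (fst (snd w)) (fst (snd (snd w))) (snd (snd (snd w))) then 0 else G.PP w)"
      unfolding w L.P2_def L.Tg_def using G.PP_nn[of "(x,u,v,z)"] by auto
  qed
  have e3: "exp (-3) \<le> (1/3::real)"
  proof -
    have "(3::real) \<le> exp 3" using exp_ge_add_one_self[of "3::real"] by simp
    then show ?thesis by (simp add: exp_minus field_simps)
  qed
  have bad: "(\<Sum>w\<in>G.BN \<times> G.BN \<times> G.BN \<times> G.ZN. L.P2 w) \<le> 1 / real N"
  proof -
    have "(\<Sum>w\<in>G.BN \<times> G.BN \<times> G.BN \<times> G.ZN. L.P2 w)
       \<le> (\<Sum>w\<in>G.Om. (if L.TX (fst w) (fst (snd w)) (snd (snd (snd w))) then 0 else G.PP w)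
      + (if L.TU (fst (snd w)) (snd (snd (snd w))) then 0 else G.PP w)
      + (if L.TV (fst w) (fst (snd w)) (fst (snd (snd w))) (snd (snd (snd w))) then 0 else G.PP w))"
      unfolding G.Om_def by (rule sum_mono) (rule P2le)
    also have "\<dots> = (\<Sum>w\<in>G.Om. if L.TX (fst w) (fst (snd w)) (snd (snd (snd w))) then 0 else G.PP w)
      + (\<Sum>w\<in>G.Om. if L.TU (fst (snd w)) (snd (snd (snd w))) then 0 else G.PP w)
      + (\<Sum>w\<in>G.Om. if L.TV (fst w) (fst (snd w)) (fst (snd (snd w))) (snd (snd (snd w))) then 0 else G.PP w)"
      by (simp only: sum.distrib)
    also have "\<dots> \<le> exp (-3) / real N + exp (-3) / real N + exp (-3) / real N"
      using bX bU bV by linarith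
    also have "\<dots> = 3 * exp (-3) / real N" by simp
    also have "\<dots> \<le> 3 * (1/3) / real N"
      using e3 N1 by (intro divide_right_mono) auto
    finally show ?thesis by simp
  qed
  have "var_dist (hashed_dist N q FX FU FV) (ideal_dist N q rX rU rV)
           (bitstrings rX \<times> bitstrings rU \<times> bitstrings rV \<times> {zs. length zs = N})
       \<le> 2 * (\<Sum>w\<in>G.BN \<times> G.BN \<times> G.BN \<times> G.ZN. L.P2 w) + L.mu"
    unfolding lhs by (rule L.main_thm)
  also have "\<dots> \<le> 2 * (1 / real N) + L.mu" using bad by simp
  also have "\<dots> = 2 / real N + sqrt 7 * 2 powr (- real N * \<xi> / 2)" by (simp add: L.mu_def)
  finally show ?thesis .
qed

end
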